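(* Under the hypotheses of Theorem 3, for each vertex $v\in\mathcal{S}_{\mathcal{G}}'$ the set $\mathcal{S}_v=\{n:(v,n)\in\mathcal{S}\}$ satisfies $$R_D(\mathcal{S}_v)\ \ge\ B-\int_{\mathcal{F}}\operatorname{rank}\big(\mathbf{U}_{\mathcal{G}}(\mathcal{S}_{\mathcal{G}}'\setminus\{v\},\mathcal{I}_f)\big)\,df.$$
   Context: Same setting as Theorem 3: $\mathcal{G}$ undirected graph with $N$ vertices, orthonormal Laplacian eigenvector matrix $\mathbf{U}_{\mathcal{G}}$ (columns $\mathbf{u}_i$), $\mathbf{U}_{\mathcal{G}}(A,C)$ row/column submatrix; DTVGS with $\ell^2(\mathbb{Z})$ vertex sequences; JFT $\mathcal{F}_{\mathcal{J}}(\mathbf{X})(i,f)=\sum_v\mathbf{u}_i(v)\sum_n\mathbf{X}(v,n)e^{-j2\pi fn}$ in normalized frequency $f\in[-\tfrac12,\tfrac12)$; supports $\mathcal{F}_i$, $\mathcal{F}=\bigcup\mathcal{F}_i$, $\mathcal{I}_f=\{i:f\in\mathcal{F}_i\}$, $\mathcal{I}=\bigcup_f\mathcal{I}_f$, $B_{\mathcal{G}}=|\mathcal{I}|$, $B=\sum_i\mu(\mathcal{F}_i)$; $\mathcal{BL}_D$ space of DTVGS with JFT vanishing off the $\mathcal{F}_i$; $\mathcal{S}_{\mathcal{G}}'$ with $|\mathcal{S}_{\mathcal{G}}'|=B_{\mathcal{G}}$, $\operatorname{rank}\mathbf{U}_{\mathcal{G}}(\mathcal{S}_{\mathcal{G}}',\mathcal{I})=B_{\mathcal{G}}$;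 $\mathcal{S}\subseteq\mathcal{S}_{\mathcal{G}}'\times\mathbb{Z}$ stable (two-sided energy inequality with constants $0<A\le A'<\infty$); $R_D(\mathcal{S}_v)=\liminf_{n\to\infty}|\mathcal{S}_v\cap[-n,n]|/(2n)$. *)

theory Defs
  imports "HOL-Analysis.Analysis"
begin

text \<open>Vertices of the graph are the elements of a finite type 'n (so N = CARD('n)).
  Matrices are indexed U $ v $ i : row = vertex v, column = eigenvector index i,
  so column i U is the Laplacian eigenvector u_i.\<close>

definition undirected_weights :: "real^'n^'n \<Rightarrow> bool" where
  "undirected_weights W \<longleftrightarrow>
     (\<forall>i j. W$i$j = W$j$i \<and> W$i$j \<ge> 0) \<and> (\<forall>i. W$i$i = 0)"

definition graph_laplacian :: "real^'n^'n \<Rightarrow> real^'n^'n" where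
  "graph_laplacian W = (\<chi> i j. (if i = j then (\<Sum>k\<in>UNIV. W$i$k) else 0) - W$i$j)"

definition laplacian_eigvecs :: "real^'n^'n \<Rightarrow> real^'n^'n \<Rightarrow> bool" where
  "laplacian_eigvecs W U \<longleftrightarrow>
     transpose U ** U = mat 1 \<and>
     (\<exists>lam :: 'n \<Rightarrow> real. \<forall>i. graph_laplacian W *v column i U = lam i *s column i U)"

text \<open>rank of the submatrix U(A,C) (rows A, columns C) = dimension of the span of
  its columns (padded with zeros outside A).\<close>
definition sub_rank :: "real^'n^'n \<Rightarrow> 'n set \<Rightarrow> 'n set \<Rightarrow> nat" where
  "sub_rank U A C = dim ((\<lambda>i. (\<chi> v. if v \<in> A then U$v$i else 0) :: real^'n) ` C)"

definition Iset :: "('n \<Rightarrow> real set) \<Rightarrow> real \<Rightarrow> 'n set" where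
  "Iset F f = {i. f \<in> F i}"

definition Iall :: "('n \<Rightarrow> real set) \<Rightarrow> 'n set" where
  "Iall F = (\<Union>f\<in>{-1/2..<1/2}. Iset F f)"

definition idtft :: "(real \<Rightarrow> complex) \<Rightarrow> int \<Rightarrow> complex" where
  "idtft G n = (LINT f:{-1/2..<1/2}|lborel. G f * exp (2 * pi * \<i> * of_real f * of_int n))"

text \<open>Band-limited DTVGS: every vertex sequence is in l^2(Z), and the JFT (an L^2 function
  of f for each i) vanishes off F_i; phrased by representing X through its JFT G.\<close>
definition BL_D :: "real^'n^'n \<Rightarrow> ('n \<Rightarrow> real set) \<Rightarrow> ('n \<Rightarrow> int \<Rightarrow> complex) \<Rightarrow> bool" where
  "BL_D U F X \<longleftrightarrow>
     (\<forall>v. (\<lambda>n. (cmod (X v n))^2) summable_on UNIV) \<and>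
     (\<exists>G :: 'n \<Rightarrow> real \<Rightarrow> complex.
        (\<forall>i. G i \<in> borel_measurable lborel \<and>
             set_integrable lborel {-1/2..<1/2} (\<lambda>f. (cmod (G i f))^2) \<and>
             (\<forall>f\<in>{-1/2..<1/2} - F i. G i f = 0)) \<and>
        (\<forall>v n. X v n = (\<Sum>i\<in>UNIV. complex_of_real (U$v$i) * idtft (G i) n)))"

definition energy_on :: "('n \<Rightarrow> int \<Rightarrow> complex) \<Rightarrow> ('n \<times> int) set \<Rightarrow> real" where
  "energy_on X S = (\<Sum>\<^sub>\<infinity>(v,n)\<in>S. (cmod (X v n))^2)"

definition stable_sampling ::
  "real^'n^'n \<Rightarrow> ('n \<Rightarrow> real set) \<Rightarrow> ('n \<times> int) set \<Rightarrow> real \<Rightarrow> real \<Rightarrow> bool" where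
  "stable_sampling U F S A A' \<longleftrightarrow> 0 < A \<and> A \<le> A' \<and>
     (\<forall>X. BL_D U F X \<longrightarrow>
        A * energy_on X UNIV \<le> energy_on X S \<and> energy_on X S \<le> A' * energy_on X UNIV)"

definition R_D :: "int set \<Rightarrow> ereal" where
  "R_D Sv = liminf (\<lambda>n::nat. ereal (real (card (Sv \<inter> {- int n..int n})) / (2 * real n)))"

end

theory Submission
  imports Defs
begin

definition ee :: "int \<Rightarrow> real \<Rightarrow> complex" where
  "ee k f = exp (2 * pi * \<i> * of_real f * of_int k)"

lemma idtft_ee: "idtft G n = (LINT f:{-1/2..<1/2}|lborel. G f * ee n f)"
  by (simp add: idtft_def ee_def)

lemma ee_cont[continuous_intros]: "continuous_on A (ee k)"
  unfolding ee_def by (intro continuous_intros)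

lemma ee_meas[measurable]: "ee k \<in> borel_measurable borel"
  by (intro borel_measurable_continuous_onI ee_cont)

lemma ee_alt: "ee k f = exp (\<i> * complex_of_real (2*pi*f*k))"
  unfolding ee_def by (simp add: algebra_simps)

lemma norm_ee[simp]: "norm (ee k f) = 1"
  unfolding ee_alt by (rule norm_exp_i_times)

lemma ee_mult: "ee k f * ee l f = ee (k + l) f"
  unfolding ee_def by (simp add: exp_add[symmetric] algebra_simps)

lemma cnj_ee: "cnj (ee k f) = ee (-k) f"
  unfolding ee_alt by (simp add: exp_cnj)

lemma ee_zero[simp]: "ee 0 f = 1"
  unfolding ee_def by simp

lemma LBINT_Icc_ee: "(LBINT x:{-1/2..1/2}. ee k x) = (if k = 0 then 1 else 0)"
proof (cases "k = 0")
  case True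
  then show ?thesis by (simp add: set_integral_const measure_lborel_Icc)
next
  case False
  define c where "c = 2 * complex_of_real pi * \<i> * of_int k"
  have c0: "c \<noteq> 0" using False by (simp add: c_def)
  have eq: "ee k x = exp (c * of_real x)" for x unfolding ee_def c_def by (simp add: algebra_simps)
  have "(LBINT x=ereal (-1/2)..ereal (1/2). ee k x) = exp (c * of_real (1/2)) / c - exp (c * of_real (-1/2)) / c"
  proof (rule interval_integral_FTC_finite[where F="\<lambda>x. exp (c * of_real x) / c"])
    show "continuous_on {min (- 1 / 2) (1 / 2)..max (- 1 / 2) (1 / 2)} (ee k)" by (rule ee_cont)
    fix x :: real
    have "((\<lambda>z. exp (c*z)/c) has_field_derivative exp (c * of_real x)) (at (of_real x))"
      using c0 by (auto intro!: derivative_eq_intros)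
    then have "((\<lambda>x. exp (c * of_real x) / c) has_vector_derivative exp (c * of_real x))
       (at x within {min (- 1 / 2) (1 / 2)..max (- 1 / 2) (1 / 2)})"
      by (rule has_vector_derivative_real_field)
    then show "((\<lambda>x. exp (c * complex_of_real x) / c) has_vector_derivative ee k x)
           (at x within {min (- 1 / 2) (1 / 2)..max (- 1 / 2) (1 / 2)})"
      by (simp add: eq)
  qed
  also have "exp (c * of_real (1/2)) = exp (c * of_real (-1/2))"
  proof -
    have "exp (c * of_real (1/2)) = exp (c * of_real (-1/2)) * exp (c)"
      by (simp add: exp_add[symmetric] algebra_simps)
    moreover have "exp c = 1" unfolding c_def
      using exp_integer_2pi[of "of_int k"] by (simp add: algebra_simps)
    ultimately show ?thesis by simp
  qed
  finally show ?thesis using False by (simp add: interval_integral_Icc)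
qed

lemma LINT_I0_ee: "(LINT x:{-1/2..<1/2}|lborel. ee k x) = (if k = 0 then 1 else 0)"
proof -
  have "(LINT x:{-1/2..<1/2}|lborel. ee k x) = (LINT x:{-1/2..1/2}|lborel. ee k x)"
    by (rule set_integral_discrete_difference[where X="{1/2}"]) auto
  then show ?thesis using LBINT_Icc_ee by simp
qed

definition I0 :: "real set" where "I0 = {-1/2..<1/2}"
lemma I0_sets[measurable, simp]: "I0 \<in> sets borel" by (simp add: I0_def)
abbreviation "M0 \<equiv> restrict_space lborel I0"

lemma space_M0[simp]: "space M0 = I0" by (simp add: space_restrict_space)

lemma finite_M0: "finite_measure M0"
  by (rule finite_measureI) (simp add: emeasure_restrict_space I0_def)

lemma set_I0: fixes g :: "real \<Rightarrow> 'b::{banach,second_countable_topology}" shows "set_lebesgue_integral lborel I0 g = integral\<^sup>L M0 g"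
  unfolding set_lebesgue_integral_def using integral_restrict_space[of I0 lborel g] by simp

lemma set_integrable_I0: fixes g :: "real \<Rightarrow> 'b::{banach,second_countable_topology}" shows "set_integrable lborel I0 g \<longleftrightarrow> integrable M0 g"
  unfolding set_integrable_def using integrable_restrict_space[of I0 lborel g] by simp

definition bm :: "(real \<Rightarrow> 'a::{banach,second_countable_topology}) \<Rightarrow> bool" where
  "bm g \<longleftrightarrow> g \<in> borel_measurable M0 \<and> (\<exists>B. \<forall>x. norm (g x) \<le> B)"

lemma bm_integrable: "bm g \<Longrightarrow> integrable M0 g"
  unfolding bm_def using finite_measure.integrable_const_bound[OF finite_M0] by blast

lemma bm_meas: "bm g \<Longrightarrow> g \<in> borel_measurable M0" by (simp add: bm_def)

lemma bm_add: "bm (f::real \<Rightarrow> complex) \<Longrightarrow> bm g \<Longrightarrow> bm (\<lambda>x. f x + g x)"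
  unfolding bm_def
proof safe
  fix B C assume b: "\<forall>x. norm (f x) \<le> B" "\<forall>x. norm (g x) \<le> C"
  have "norm (f x + g x) \<le> B + C" for x using norm_triangle_ineq[of "f x" "g x"] b[rule_format, of x] by linarith
  then have "\<forall>x. norm (f x + g x) \<le> B + C" by blast
  then show "\<exists>B. \<forall>x. norm (f x + g x) \<le> B" by blast
qed auto

lemma bm_diff: "bm (f::real \<Rightarrow> complex) \<Longrightarrow> bm g \<Longrightarrow> bm (\<lambda>x. f x - g x)"
  unfolding bm_def
proof safe
  fix B C assume b: "\<forall>x. norm (f x) \<le> B" "\<forall>x. norm (g x) \<le> C"
  have "norm (f x - g x) \<le> B + C" for x using norm_triangle_ineq4[of "f x" "g x"] b[rule_format, of x] by linarith
  then have "\<forall>x. norm (f x - g x) \<le> B + C" by blast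
  then show "\<exists>B. \<forall>x. norm (f x - g x) \<le> B" by blast
qed auto

lemma bm_mult: "bm (f::real \<Rightarrow> complex) \<Longrightarrow> bm g \<Longrightarrow> bm (\<lambda>x. f x * g x)"
  unfolding bm_def
proof safe
  fix B C assume b: "\<forall>x. norm (f x) \<le> B" "\<forall>x. norm (g x) \<le> C"
  have "norm (f x * g x) \<le> B * C" for x
    unfolding norm_mult using b[rule_format, of x] by (intro mult_mono) (auto intro: order_trans[OF norm_ge_zero])
  then have "\<forall>x. norm (f x * g x) \<le> B * C" by blast
  then show "\<exists>B. \<forall>x. norm (f x * g x) \<le> B" by blast
qed auto

lemma bm_cnj: "bm (f::real \<Rightarrow> complex) \<Longrightarrow> bm (\<lambda>x. cnj (f x))"
  unfolding bm_def by (auto intro: measurable_compose[OF _ borel_measurable_continuous_onI[OF continuous_on_cnj[OF continuous_on_id]]])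

lemma bm_const: "bm (\<lambda>x. c::complex)"
  unfolding bm_def by auto

lemma bm_ee: "bm (ee k)"
  unfolding bm_def by (auto intro: measurable_restrict_space1)

lemma bm_sum: "(\<And>k. k \<in> K \<Longrightarrow> bm (f k)) \<Longrightarrow> bm (\<lambda>x. \<Sum>k\<in>K. (f k x::complex))"
proof (induction K rule: infinite_finite_induct)
  case (infinite A)
  then show ?case by (simp add: bm_const)
next
  case empty
  then show ?case by (simp add: bm_const)
next
  case (insert x F)
  then show ?case by (simp add: bm_add)
qed

lemma bm_of_real: "bm (g::real\<Rightarrow>real) \<Longrightarrow> bm (\<lambda>x. complex_of_real (g x))"
  unfolding bm_def by auto

lemma bm_cmod2: "bm (g::real\<Rightarrow>complex) \<Longrightarrow> bm (\<lambda>x. (cmod (g x))^2)"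
  unfolding bm_def
proof safe
  fix B assume b: "\<forall>x. norm (g x) \<le> B"
  then have "\<forall>x. norm ((cmod (g x))^2) \<le> B^2"
    by (simp add: power_mono)
  then show "\<exists>B. \<forall>x. norm ((cmod (g x))^2) \<le> B" by blast
qed auto

lemma int_ee: "integral\<^sup>L M0 (\<lambda>x. ee k x * cnj (ee l x)) = (if k = l then 1 else 0)"
proof -
  have "integral\<^sup>L M0 (\<lambda>x. ee k x * cnj (ee l x)) = integral\<^sup>L M0 (ee (k - l))"
    by (simp add: cnj_ee ee_mult)
  also have "\<dots> = (if k = l then 1 else 0)"
    using LINT_I0_ee[of "k-l", folded I0_def] set_I0[of "ee (k-l)"] by simp
  finally show ?thesis .
qed

lemma cmod2_Re: "(cmod z)^2 = Re (z * cnj z)"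
  by (simp add: complex_mult_cnj cmod_def)

lemma expand:
  assumes g: "bm g" and K: "finite K"
  shows "(\<integral>x. (cmod (g x - (\<Sum>k\<in>K. c k * ee k x)))^2 \<partial>M0) =
     (\<integral>x. (cmod (g x))^2 \<partial>M0) - 2 * Re (\<Sum>k\<in>K. cnj (c k) * (\<integral>x. g x * cnj (ee k x) \<partial>M0))
     + (\<Sum>k\<in>K. (cmod (c k))^2)"
proof -
  define t where "t x = (\<Sum>k\<in>K. c k * ee k x)" for x
  have bt: "bm t" unfolding t_def by (intro bm_sum bm_mult bm_const bm_ee)
  have pw: "(cmod (g x - t x))^2 = (cmod (g x))^2 - 2 * Re (g x * cnj (t x)) + (cmod (t x))^2" for x
    unfolding cmod2_Re by (simp add: algebra_simps)
  have i1: "integrable M0 (\<lambda>x. (cmod (g x))^2)" by (intro bm_integrable bm_cmod2 g)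
  have i2: "integrable M0 (\<lambda>x. g x * cnj (t x))" by (intro bm_integrable bm_mult bm_cnj g bt)
  have i3: "integrable M0 (\<lambda>x. (cmod (t x))^2)" by (intro bm_integrable bm_cmod2 bt)
  have "(\<integral>x. (cmod (g x - t x))^2 \<partial>M0) =
      (\<integral>x. (cmod (g x))^2 \<partial>M0) - 2 * (\<integral>x. Re (g x * cnj (t x)) \<partial>M0) + (\<integral>x. (cmod (t x))^2 \<partial>M0)"
  proof -
    have iR: "integrable M0 (\<lambda>x. 2 * Re (g x * cnj (t x)))" using i2 by (intro integrable_mult_right integrable_Re)
    show ?thesis unfolding pw
      by (simp only: Bochner_Integration.integral_add[OF Bochner_Integration.integrable_diff[OF i1 iR] i3] Bochner_Integration.integral_diff[OF i1 iR] integral_mult_right_zero)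
  qed
  also have "(\<integral>x. Re (g x * cnj (t x)) \<partial>M0) = Re (\<integral>x. g x * cnj (t x) \<partial>M0)"
    using i2 by (rule integral_Re)
  also have "(\<integral>x. g x * cnj (t x) \<partial>M0) = (\<Sum>k\<in>K. cnj (c k) * (\<integral>x. g x * cnj (ee k x) \<partial>M0))"
  proof -
    have "(\<integral>x. g x * cnj (t x) \<partial>M0) = (\<integral>x. (\<Sum>k\<in>K. cnj (c k) * (g x * cnj (ee k x))) \<partial>M0)"
      unfolding t_def by (simp add: sum_distrib_left algebra_simps)
    also have "\<dots> = (\<Sum>k\<in>K. (\<integral>x. cnj (c k) * (g x * cnj (ee k x)) \<partial>M0))"
      by (intro Bochner_Integration.integral_sum bm_integrable bm_mult bm_const bm_cnj bm_ee g)
    also have "\<dots> = (\<Sum>k\<in>K. cnj (c k) * (\<integral>x. g x * cnj (ee k x) \<partial>M0))"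
      by simp
    finally show ?thesis .
  qed
  also have "(\<integral>x. (cmod (t x))^2 \<partial>M0) = (\<Sum>k\<in>K. (cmod (c k))^2)"
  proof -
    have "(\<integral>x. (cmod (t x))^2 \<partial>M0) = (\<integral>x. Re (t x * cnj (t x)) \<partial>M0)"
      by (simp add: cmod2_Re)
    also have "\<dots> = Re (\<integral>x. t x * cnj (t x) \<partial>M0)"
      by (intro integral_Re bm_integrable bm_mult bm_cnj bt)
    also have "(\<integral>x. t x * cnj (t x) \<partial>M0) =
        (\<integral>x. (\<Sum>l\<in>K. \<Sum>k\<in>K. c k * cnj (c l) * (ee k x * cnj (ee l x))) \<partial>M0)"
      unfolding t_def by (simp add: sum_distrib_left sum_distrib_right algebra_simps)
    also have "\<dots> = (\<Sum>l\<in>K. \<Sum>k\<in>K. c k * cnj (c l) * (\<integral>x. ee k x * cnj (ee l x) \<partial>M0))"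
    proof -
      have "(\<integral>x. (\<Sum>l\<in>K. \<Sum>k\<in>K. c k * cnj (c l) * (ee k x * cnj (ee l x))) \<partial>M0) =
         (\<Sum>l\<in>K. (\<integral>x. (\<Sum>k\<in>K. c k * cnj (c l) * (ee k x * cnj (ee l x))) \<partial>M0))"
        by (intro Bochner_Integration.integral_sum bm_integrable bm_sum bm_mult bm_const bm_cnj bm_ee)
      also have "\<dots> = (\<Sum>l\<in>K. \<Sum>k\<in>K. (\<integral>x. c k * cnj (c l) * (ee k x * cnj (ee l x)) \<partial>M0))"
        by (intro sum.cong refl Bochner_Integration.integral_sum bm_integrable bm_mult bm_const bm_cnj bm_ee)
      finally show ?thesis by simp
    qed
    also have "\<dots> = (\<Sum>k\<in>K. c k * cnj (c k))"
      by (simp add: int_ee if_distrib K cong: if_cong)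
    also have "Re \<dots> = (\<Sum>k\<in>K. (cmod (c k))^2)"
      by (simp add: cmod2_Re)
    finally show ?thesis .
  qed
  finally show ?thesis unfolding t_def .
qed

definition ft :: "(real \<Rightarrow> complex) \<Rightarrow> int \<Rightarrow> complex" where
  "ft g n = (\<integral>x. g x * ee n x \<partial>M0)"

lemma idtft_ft: "idtft G n = ft G n"
  unfolding idtft_ee ft_def I0_def[symmetric] by (rule set_I0)

lemma bessel:
  assumes g: "bm g" and K: "finite K"
  shows "(\<Sum>n\<in>K. (cmod (ft g n))^2) \<le> (\<integral>x. (cmod (g x))^2 \<partial>M0)"
proof -
  define c where "c k = (\<integral>x. g x * cnj (ee k x) \<partial>M0)" for k
  have ftc: "ft g n = c (-n)" for n unfolding ft_def c_def by (simp add: cnj_ee)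
  have e: "(\<integral>x. (cmod (g x - (\<Sum>k\<in>uminus ` K. c k * ee k x)))^2 \<partial>M0) =
     (\<integral>x. (cmod (g x))^2 \<partial>M0) - 2 * Re (\<Sum>k\<in>uminus ` K. cnj (c k) * c k)
     + (\<Sum>k\<in>uminus ` K. (cmod (c k))^2)"
    using expand[OF g, of "uminus ` K" c] K unfolding c_def by simp
  have "Re (\<Sum>k\<in>uminus ` K. cnj (c k) * c k) = (\<Sum>k\<in>uminus ` K. (cmod (c k))^2)"
    by (simp add: cmod2_Re mult.commute)
  moreover have "(\<Sum>k\<in>uminus ` K. (cmod (c k))^2) = (\<Sum>n\<in>K. (cmod (ft g n))^2)"
    by (subst sum.reindex) (auto simp: ftc inj_on_def)
  moreover have "0 \<le> (\<integral>x. (cmod (g x - (\<Sum>k\<in>uminus ` K. c k * ee k x)))^2 \<partial>M0)"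
    by (rule integral_nonneg_AE) auto
  ultimately show ?thesis using e by linarith
qed

lemma parseval_poly:
  assumes K: "finite K"
  shows "(\<integral>x. (cmod (\<Sum>k\<in>K. c k * ee k x))^2 \<partial>M0) = (\<Sum>k\<in>K. (cmod (c k))^2)"
  using expand[OF bm_const[of 0] K, of c] by simp

lemma ft_summable:
  assumes g: "bm g"
  shows "(\<lambda>n. (cmod (ft g n))^2) summable_on A"
proof -
  have "(\<lambda>n. (cmod (ft g n))^2) summable_on UNIV"
    by (rule nonneg_bdd_above_summable_on) (auto intro!: bdd_aboveI[where M="\<integral>x. (cmod (g x))^2 \<partial>M0"] bessel g)
  then show ?thesis by (rule summable_on_subset_banach) simp
qed

lemma ft_infsum_le:
  assumes g: "bm g"
  shows "(\<Sum>\<^sub>\<infinity>n\<in>A. (cmod (ft g n))^2) \<le> (\<integral>x. (cmod (g x))^2 \<partial>M0)"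
  by (rule infsum_le_finite_sums[OF ft_summable[OF g]]) (rule bessel[OF g])

lemma ft_add: "bm f \<Longrightarrow> bm g \<Longrightarrow> ft (\<lambda>x. f x + g x) n = ft f n + ft g n"
  unfolding ft_def by (simp add: distrib_right bm_integrable bm_mult bm_ee)

lemma ft_diff: "bm f \<Longrightarrow> bm g \<Longrightarrow> ft (\<lambda>x. f x - g x) n = ft f n - ft g n"
  unfolding ft_def by (simp add: left_diff_distrib bm_integrable bm_mult bm_ee)

lemma ft_sum: "finite J \<Longrightarrow> (\<And>m. m \<in> J \<Longrightarrow> bm (f m)) \<Longrightarrow> ft (\<lambda>x. \<Sum>m\<in>J. f m x) n = (\<Sum>m\<in>J. ft (f m) n)"
  unfolding ft_def by (simp add: sum_distrib_right Bochner_Integration.integral_sum bm_integrable bm_mult bm_ee)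

lemma ft_cmult: "bm f \<Longrightarrow> ft (\<lambda>x. c * f x) n = c * ft f n"
  unfolding ft_def by (simp add: mult.assoc)

lemma infsum_finite_sum:
  fixes f :: "'i \<Rightarrow> 'a \<Rightarrow> real"
  assumes "finite J" "\<And>m. m \<in> J \<Longrightarrow> f m summable_on A"
  shows "(\<Sum>m\<in>J. \<Sum>\<^sub>\<infinity>n\<in>A. f m n) = (\<Sum>\<^sub>\<infinity>n\<in>A. \<Sum>m\<in>J. f m n)"
    and "(\<lambda>n. \<Sum>m\<in>J. f m n) summable_on A"
  using assms
proof (induction J rule: finite_induct)
  case empty
  { case 1 then show ?case by simp }
  { case 2 then show ?case by simp }
next
  case (insert x F)
  { case 1 then show ?case using insert by (simp add: infsum_add) }
  { case 2 then show ?case using insert by (simp add: summable_on_add) }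
qed

definition ipJ :: "'j set \<Rightarrow> ('j \<Rightarrow> complex) \<Rightarrow> ('j \<Rightarrow> complex) \<Rightarrow> complex" where
  "ipJ J a b = (\<Sum>m\<in>J. a m * cnj (b m))"

definition nJ :: "'j set \<Rightarrow> ('j \<Rightarrow> complex) \<Rightarrow> real" where
  "nJ J a = (\<Sum>m\<in>J. (cmod (a m))^2)"

definition orthonormal :: "'j set \<Rightarrow> ('j \<Rightarrow> complex) set \<Rightarrow> bool" where
  "orthonormal J W \<longleftrightarrow> (\<forall>w\<in>W. \<forall>w'\<in>W. ipJ J w w' = (if w = w' then 1 else 0))"

definition proj :: "'j set \<Rightarrow> ('j \<Rightarrow> complex) set \<Rightarrow> ('j \<Rightarrow> complex) \<Rightarrow> 'j \<Rightarrow> complex" where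
  "proj J W y = (\<lambda>m. \<Sum>w\<in>W. ipJ J y w * w m)"

lemma mult_cnj_sq: "z * cnj z = (complex_of_real (cmod z))^2"
  using complex_norm_square[of z] by simp

lemma nJ_ipJ: "complex_of_real (nJ J a) = ipJ J a a"
  unfolding nJ_def ipJ_def by (simp add: mult_cnj_sq)

lemma nJ_nonneg: "0 \<le> nJ J a"
  unfolding nJ_def by (simp add: sum_nonneg)

lemma ipJ_swap: "ipJ J b a = cnj (ipJ J a b)"
  unfolding ipJ_def by (simp add: mult.commute)

lemma ipJ_diff_left: "ipJ J (\<lambda>m. a m - b m) c = ipJ J a c - ipJ J b c"
  unfolding ipJ_def by (simp add: left_diff_distrib sum_subtractf)

lemma ipJ_add_left: "ipJ J (\<lambda>m. a m + b m) c = ipJ J a c + ipJ J b c"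
  unfolding ipJ_def by (simp add: distrib_right sum.distrib)

lemma ipJ_diff_right: "ipJ J c (\<lambda>m. a m - b m) = ipJ J c a - ipJ J c b"
  unfolding ipJ_def by (simp add: right_diff_distrib sum_subtractf)

lemma ipJ_scale_left: "ipJ J (\<lambda>m. s * a m) c = s * ipJ J a c"
  unfolding ipJ_def by (simp add: sum_distrib_left mult.assoc)

lemma ipJ_proj_left: "ipJ J (proj J W y) z = (\<Sum>w\<in>W. ipJ J y w * ipJ J w z)"
proof -
  have "ipJ J (proj J W y) z = (\<Sum>m\<in>J. \<Sum>w\<in>W. ipJ J y w * (w m * cnj (z m)))"
    unfolding proj_def by (simp add: ipJ_def[of J "\<lambda>m. \<Sum>w\<in>W. ipJ J y w * w m"] sum_distrib_right mult.assoc)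
  also have "\<dots> = (\<Sum>w\<in>W. \<Sum>m\<in>J. ipJ J y w * (w m * cnj (z m)))"
    by (rule sum.swap)
  also have "\<dots> = (\<Sum>w\<in>W. ipJ J y w * ipJ J w z)"
    unfolding ipJ_def[of J w z for w] by (simp add: sum_distrib_left)
  finally show ?thesis .
qed

lemma ipJ_cong: "(\<And>m. m \<in> J \<Longrightarrow> a m = a' m) \<Longrightarrow> ipJ J a b = ipJ J a' b"
  unfolding ipJ_def by simp

lemma ipJ_proj_on:
  assumes "orthonormal J W" "finite W" "w \<in> W"
  shows "ipJ J (proj J W y) w = ipJ J y w"
proof -
  have "ipJ J (proj J W y) w = (\<Sum>w'\<in>W. ipJ J y w' * (if w' = w then 1 else 0))"
    unfolding ipJ_proj_left using assms(1,3) unfolding orthonormal_def by (intro sum.cong) auto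
  also have "\<dots> = ipJ J y w" using assms by (simp add: if_distrib cong: if_cong)
  finally show ?thesis .
qed

lemma ipJ_proj_proj:
  assumes "orthonormal J W" "finite W"
  shows "ipJ J (proj J W y) (proj J W z) = (\<Sum>w\<in>W. ipJ J y w * cnj (ipJ J z w))"
proof -
  have "ipJ J (proj J W y) (proj J W z) = (\<Sum>w\<in>W. ipJ J y w * ipJ J w (proj J W z))"
    by (rule ipJ_proj_left)
  also have "\<dots> = (\<Sum>w\<in>W. ipJ J y w * cnj (ipJ J z w))"
    by (intro sum.cong refl) (metis assms ipJ_proj_on ipJ_swap)
  finally show ?thesis .
qed

lemma ipJ_proj_right:
  assumes "orthonormal J W" "finite W"
  shows "ipJ J y (proj J W z) = (\<Sum>w\<in>W. ipJ J y w * cnj (ipJ J z w))"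
proof -
  have "ipJ J y (proj J W z) = cnj (ipJ J (proj J W z) y)" by (rule ipJ_swap)
  also have "\<dots> = cnj (\<Sum>w\<in>W. ipJ J z w * ipJ J w y)" by (simp add: ipJ_proj_left)
  also have "\<dots> = (\<Sum>w\<in>W. ipJ J y w * cnj (ipJ J z w))"
    by (simp add: ipJ_swap[of J _ y] mult.commute)
  finally show ?thesis .
qed

lemma nJ_proj:
  assumes "orthonormal J W" "finite W"
  shows "nJ J (proj J W y) = (\<Sum>w\<in>W. (cmod (ipJ J y w))^2)"
proof -
  have "complex_of_real (nJ J (proj J W y)) = (\<Sum>w\<in>W. ipJ J y w * cnj (ipJ J y w))"
    unfolding nJ_ipJ by (rule ipJ_proj_proj[OF assms])
  also have "\<dots> = complex_of_real (\<Sum>w\<in>W. (cmod (ipJ J y w))^2)"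
    by (simp add: mult_cnj_sq)
  finally show ?thesis by (simp only: of_real_eq_iff)
qed

lemma nJ_resid:
  assumes "orthonormal J W" "finite W"
  shows "nJ J (\<lambda>m. y m - proj J W y m) = nJ J y - (\<Sum>w\<in>W. (cmod (ipJ J y w))^2)"
proof -
  have "complex_of_real (nJ J (\<lambda>m. y m - proj J W y m)) =
     ipJ J y y - ipJ J y (proj J W y) - ipJ J (proj J W y) y + ipJ J (proj J W y) (proj J W y)"
    unfolding nJ_ipJ ipJ_diff_left ipJ_diff_right by simp
  also have "\<dots> = ipJ J y y - (\<Sum>w\<in>W. ipJ J y w * cnj (ipJ J y w))"
  proof -
    have "ipJ J (proj J W y) y = (\<Sum>w\<in>W. ipJ J y w * cnj (ipJ J y w))"
      unfolding ipJ_proj_left by (intro sum.cong refl) (simp add: ipJ_swap[of J _ y])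
    then show ?thesis
      using ipJ_proj_proj[OF assms, of y y] ipJ_proj_right[OF assms, of y y] by simp
  qed
  also have "\<dots> = complex_of_real (nJ J y - (\<Sum>w\<in>W. (cmod (ipJ J y w))^2))"
    by (simp add: mult_cnj_sq nJ_ipJ[symmetric])
  finally show ?thesis by (simp only: of_real_eq_iff)
qed

lemma nJ_zero: "finite J \<Longrightarrow> nJ J a = 0 \<Longrightarrow> m \<in> J \<Longrightarrow> a m = 0"
  unfolding nJ_def by (simp add: sum_nonneg_eq_0_iff)

lemma gram_schmidt:
  assumes J: "finite J" and P: "finite P"
  shows "\<exists>W. finite W \<and> card W \<le> card P \<and> orthonormal J W \<and> (\<forall>\<psi>\<in>P. \<forall>m\<in>J. \<psi> m = proj J W \<psi> m)"
  using P
proof (induction P rule: finite_induct)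
  case empty
  show ?case by (rule exI[of _ "{}"]) (simp add: orthonormal_def)
next
  case (insert \<psi>0 P)
  then obtain W where W: "finite W" "card W \<le> card P" "orthonormal J W"
    and exp: "\<forall>\<psi>\<in>P. \<forall>m\<in>J. \<psi> m = proj J W \<psi> m" by blast
  define r where "r m = \<psi>0 m - proj J W \<psi>0 m" for m
  have rW: "ipJ J r w = 0" if "w \<in> W" for w
    unfolding r_def ipJ_diff_left using ipJ_proj_on[OF W(3) W(1) that] by simp
  show ?case
  proof (cases "nJ J r = 0")
    case True
    then have "\<forall>m\<in>J. \<psi>0 m = proj J W \<psi>0 m" using nJ_zero[OF J True] unfolding r_def by auto
    then have "\<forall>\<psi>\<in>insert \<psi>0 P. \<forall>m\<in>J. \<psi> m = proj J W \<psi> m" using exp by blast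
    moreover have "card W \<le> card (insert \<psi>0 P)" using W(2) insert(1,2) by simp
    ultimately show ?thesis using W(1,3) by blast
  next
    case False
    define s where "s = sqrt (nJ J r)"
    have s0: "s > 0" using False nJ_nonneg[of J r] unfolding s_def by auto
    define w0 where "w0 m = r m / complex_of_real s" for m
    have w0W: "ipJ J w0 w = 0" if "w \<in> W" for w
      using rW[OF that] unfolding w0_def ipJ_def by (simp add: sum_divide_distrib[symmetric])
    have w0w0: "ipJ J w0 w0 = 1"
    proof -
      have "ipJ J w0 w0 = ipJ J r r / (complex_of_real s)^2"
        unfolding w0_def ipJ_def by (simp add: sum_divide_distrib[symmetric] power2_eq_square)
      also have "ipJ J r r = (complex_of_real s)^2"
        unfolding s_def by (metis nJ_ipJ nJ_nonneg of_real_power real_sqrt_pow2)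
      also have "(complex_of_real s)^2 / (complex_of_real s)^2 = 1" using s0 by simp
      finally show ?thesis .
    qed
    have w0notin: "w0 \<notin> W" using w0W w0w0 by (metis zero_neq_one)
    have sw0: "ipJ J a w0 = 0" if "a \<in> W" for a
      using w0W[OF that] ipJ_swap[of J a w0] by simp
    have orth: "orthonormal J (insert w0 W)"
      unfolding orthonormal_def
    proof (intro ballI)
      fix a b assume a: "a \<in> insert w0 W" and b: "b \<in> insert w0 W"
      have sw: "ipJ J a w0 = 0" if "a \<in> W" for a
        using w0W[OF that] ipJ_swap[of J a w0] by simp
      show "ipJ J a b = (if a = b then 1 else 0)"
        using a b W(3) w0W w0w0 sw w0notin unfolding orthonormal_def by auto
    qed
    have projins: "proj J (insert w0 W) y m = ipJ J y w0 * w0 m + proj J W y m" for y m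
      unfolding proj_def using W(1) w0notin by simp
    have P_ok: "\<forall>\<psi>\<in>P. \<forall>m\<in>J. \<psi> m = proj J (insert w0 W) \<psi> m"
    proof (intro ballI)
      fix \<psi> m assume "\<psi> \<in> P" "m \<in> J"
      have "ipJ J \<psi> w0 = ipJ J (proj J W \<psi>) w0"
        using exp \<open>\<psi> \<in> P\<close> by (intro ipJ_cong) auto
      also have "\<dots> = 0" unfolding ipJ_proj_left
        using sw0 by simp
      finally show "\<psi> m = proj J (insert w0 W) \<psi> m"
        using exp \<open>\<psi> \<in> P\<close> \<open>m \<in> J\<close> by (simp add: projins)
    qed
    have psi0_ok: "\<forall>m\<in>J. \<psi>0 m = proj J (insert w0 W) \<psi>0 m"
    proof
      fix m assume "m \<in> J"
      have "ipJ J \<psi>0 w0 = ipJ J (\<lambda>m. r m + proj J W \<psi>0 m) w0"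
        unfolding r_def by simp
      also have "\<dots> = ipJ J r w0" unfolding ipJ_add_left ipJ_proj_left
        using sw0 by simp
      also have "\<dots> = complex_of_real s"
      proof -
        have "ipJ J r w0 = ipJ J r r / complex_of_real s"
          unfolding w0_def ipJ_def by (simp add: sum_divide_distrib[symmetric])
        also have "\<dots> = complex_of_real (s^2 / s)"
          unfolding nJ_ipJ[symmetric] s_def using False nJ_nonneg[of J r] by simp
        also have "\<dots> = complex_of_real s" using s0 by (simp add: power2_eq_square)
        finally show ?thesis .
      qed
      finally have "ipJ J \<psi>0 w0 * w0 m = r m" unfolding w0_def using s0 by simp
      then show "\<psi>0 m = proj J (insert w0 W) \<psi>0 m" by (simp add: projins r_def)
    qed
    have "card (insert w0 W) \<le> card (insert \<psi>0 P)"
      using W(1,2) w0notin insert(1,2) by simp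
    moreover have "\<forall>\<psi>\<in>insert \<psi>0 P. \<forall>m\<in>J. \<psi> m = proj J (insert w0 W) \<psi> m"
      using P_ok psi0_ok by blast
    ultimately show ?thesis
      using W(1) orth by (intro exI[of _ "insert w0 W"]) simp
  qed
qed

definition iE :: "real set \<Rightarrow> real \<Rightarrow> complex" where
  "iE E x = (if x \<in> E then 1 else 0)"

definition gu :: "real set \<Rightarrow> int set \<Rightarrow> (int \<Rightarrow> complex) \<Rightarrow> real \<Rightarrow> complex" where
  "gu E J u x = iE E x * (\<Sum>m\<in>J. u m * ee (-m) x)"

definition qq :: "real set \<Rightarrow> int set \<Rightarrow> (int \<Rightarrow> complex) \<Rightarrow> real" where
  "qq E J u = (\<integral>x. (cmod (gu E J u x))^2 \<partial>M0)"

lemma bm_iE: "E \<in> sets borel \<Longrightarrow> bm (iE E)"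
proof -
  assume E: "E \<in> sets borel"
  have "iE E = (\<lambda>x. complex_of_real (indicator E x))"
    unfolding iE_def by (auto simp: indicator_def)
  moreover have "(\<lambda>x. complex_of_real (indicator E x)) \<in> borel_measurable M0"
    by (intro measurable_restrict_space1) (use E in measurable)
  ultimately show ?thesis unfolding bm_def by (auto simp: iE_def intro!: exI[of _ 1])
qed

lemma bm_gu: "E \<in> sets borel \<Longrightarrow> bm (gu E J u)"
  unfolding gu_def by (intro bm_mult bm_iE bm_sum bm_const bm_ee)

lemma qq_nonneg: "0 \<le> qq E J u"
  unfolding qq_def by (rule integral_nonneg_AE) auto

lemma ft_gu:
  assumes E: "E \<in> sets borel" and J: "finite J"
  shows "ft (gu E J u) n = (\<Sum>m\<in>J. u m * ft (iE E) (n - m))"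
proof -
  have "ft (gu E J u) n = ft (\<lambda>x. \<Sum>m\<in>J. u m * (iE E x * ee (-m) x)) n"
    unfolding gu_def by (simp add: sum_distrib_left algebra_simps)
  also have "\<dots> = (\<Sum>m\<in>J. ft (\<lambda>x. u m * (iE E x * ee (-m) x)) n)"
    by (rule ft_sum[OF J]) (intro bm_mult bm_const bm_iE[OF E] bm_ee)
  also have "\<dots> = (\<Sum>m\<in>J. u m * ft (iE E) (n - m))"
  proof (intro sum.cong refl)
    fix m
    have "ft (\<lambda>x. u m * (iE E x * ee (-m) x)) n = u m * ft (\<lambda>x. iE E x * ee (-m) x) n"
      by (rule ft_cmult) (intro bm_mult bm_iE[OF E] bm_ee)
    also have "ft (\<lambda>x. iE E x * ee (-m) x) n = ft (iE E) (n - m)"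
      unfolding ft_def by (simp add: mult.assoc ee_mult)
    finally show "ft (\<lambda>x. u m * (iE E x * ee (- m) x)) n = u m * ft (iE E) (n - m)" .
  qed
  finally show ?thesis .
qed

lemma qq_le:
  assumes E: "E \<in> sets borel" and J: "finite J"
  shows "qq E J u \<le> nJ J u"
proof -
  have "qq E J u \<le> (\<integral>x. (cmod (\<Sum>k\<in>uminus ` J. u (-k) * ee k x))^2 \<partial>M0)"
    unfolding qq_def
  proof (rule integral_mono)
    show "integrable M0 (\<lambda>x. (cmod (gu E J u x))\<^sup>2)"
      by (intro bm_integrable bm_cmod2 bm_gu E)
    show "integrable M0 (\<lambda>x. (cmod (\<Sum>k\<in>uminus ` J. u (- k) * ee k x))\<^sup>2)"
      by (intro bm_integrable bm_cmod2 bm_sum bm_mult bm_const bm_ee)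
    fix x
    have "(\<Sum>k\<in>uminus ` J. u (- k) * ee k x) = (\<Sum>m\<in>J. u m * ee (-m) x)"
      by (subst sum.reindex) (auto simp: inj_on_def)
    then show "(cmod (gu E J u x))\<^sup>2 \<le> (cmod (\<Sum>k\<in>uminus ` J. u (- k) * ee k x))\<^sup>2"
      unfolding gu_def iE_def by simp
  qed
  also have "\<dots> = (\<Sum>k\<in>uminus ` J. (cmod (u (-k)))^2)"
    by (rule parseval_poly) (use J in simp)
  also have "\<dots> = nJ J u"
    unfolding nJ_def by (subst sum.reindex) (auto simp: inj_on_def)
  finally show ?thesis .
qed

lemma qq_ip:
  assumes E: "E \<in> sets borel" and J: "finite J"
  shows "(\<Sum>n\<in>J. cnj (u n) * ft (gu E J u) n) = complex_of_real (qq E J u)"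
proof -
  define S where "S x = (\<Sum>m\<in>J. u m * ee (-m) x)" for x
  have "(\<Sum>n\<in>J. cnj (u n) * ft (gu E J u) n) = (\<Sum>n\<in>J. (\<integral>x. cnj (u n) * (gu E J u x * ee n x) \<partial>M0))"
    unfolding ft_def by simp
  also have "\<dots> = (\<integral>x. (\<Sum>n\<in>J. cnj (u n) * (gu E J u x * ee n x)) \<partial>M0)"
    by (rule Bochner_Integration.integral_sum[symmetric]) (intro bm_integrable bm_mult bm_const bm_gu E bm_ee)
  also have "\<dots> = (\<integral>x. complex_of_real ((cmod (gu E J u x))^2) \<partial>M0)"
  proof (intro Bochner_Integration.integral_cong refl)
    fix x
    have "(\<Sum>n\<in>J. cnj (u n) * (gu E J u x * ee n x)) = gu E J u x * cnj (S x)"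
      unfolding S_def by (simp add: sum_distrib_left cnj_ee algebra_simps)
    also have "\<dots> = complex_of_real ((cmod (gu E J u x))^2)"
      unfolding gu_def iE_def S_def[symmetric] by (simp add: mult_cnj_sq)
    finally show "(\<Sum>n\<in>J. cnj (u n) * (gu E J u x * ee n x)) = complex_of_real ((cmod (gu E J u x))^2)" .
  qed
  also have "\<dots> = complex_of_real (qq E J u)"
    unfolding qq_def by (rule integral_complex_of_real)
  finally show ?thesis .
qed

lemma qq_delta:
  assumes E: "E \<in> sets borel" "E \<subseteq> I0" and m: "m \<in> J" and J: "finite J"
  shows "qq E J (\<lambda>j. if j = m then 1 else 0) = measure lborel E"
proof -
  have "qq E J (\<lambda>j. if j = m then 1 else 0) = (\<integral>x. indicator E x \<partial>M0)"
    unfolding qq_def gu_def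
  proof (intro Bochner_Integration.integral_cong refl)
    fix x
    have "(\<lambda>j. (if j = m then 1 else 0) * ee (-j) x) = (\<lambda>j. if j = m then ee (-m) x else 0)" by auto
    then have "(\<Sum>j\<in>J. (if j = m then 1 else 0) * ee (-j) x) = (\<Sum>j\<in>J. if j = m then ee (-m) x else 0)"
      by (simp only:)
    also have "\<dots> = ee (-m) x" using m J by (simp add: sum.delta)
    finally have "(\<Sum>j\<in>J. (if j = m then 1 else 0) * ee (-j) x) = ee (-m) x" .
    then show "(cmod (iE E x * (\<Sum>j\<in>J. (if j = m then 1 else 0) * ee (- j) x)))\<^sup>2 = indicator E x"
      by (simp add: iE_def indicator_def)
  qed
  also have "\<dots> = measure M0 E"
  proof -
    have EM: "E \<in> sets M0" using E by (simp add: sets_restrict_space_iff)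
    show ?thesis
      using EM finite_measure.emeasure_finite[OF finite_M0, of E] E(2) by (simp add: integral_indicator top.not_eq_extremum Int_absorb2)
  qed
  also have "\<dots> = measure lborel E"
    using E by (intro measure_restrict_space) auto
  finally show ?thesis .
qed

lemma gu_add: "gu E J (\<lambda>j. a j + b j) x = gu E J a x + gu E J b x"
  unfolding gu_def by (simp add: distrib_right sum.distrib distrib_left)

lemma sq_split:
  fixes a b :: complex and e :: real
  assumes e: "e > 0"
  shows "(cmod (a + b))^2 \<le> (1 + e) * (cmod a)^2 + (1 + 1/e) * (cmod b)^2"
proof -
  have "(cmod (a + b))^2 \<le> (cmod a + cmod b)^2"
    by (intro power_mono norm_triangle_ineq) simp
  also have "\<dots> \<le> (1 + e) * (cmod a)^2 + (1 + 1/e) * (cmod b)^2"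
  proof -
    have "0 \<le> (e * cmod a - cmod b)^2 / e" using e by simp
    then have "2 * cmod a * cmod b \<le> e * (cmod a)^2 + (cmod b)^2 / e"
      using e by (simp add: power2_eq_square field_simps)
    then show ?thesis by (simp add: power2_eq_square field_simps)
  qed
  finally show ?thesis .
qed

lemma qq_split:
  assumes E: "E \<in> sets borel" and e: "e > 0"
  shows "qq E J (\<lambda>j. a j + b j) \<le> (1 + e) * qq E J a + (1 + 1/e) * qq E J b"
proof -
  have "qq E J (\<lambda>j. a j + b j) \<le> (\<integral>x. (1 + e) * (cmod (gu E J a x))^2 + (1 + 1/e) * (cmod (gu E J b x))^2 \<partial>M0)"
    unfolding qq_def gu_add
    by (intro integral_mono bm_integrable bm_cmod2 bm_add bm_gu E sq_split e
          Bochner_Integration.integrable_add integrable_mult_right)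
  also have "\<dots> = (1 + e) * qq E J a + (1 + 1/e) * qq E J b"
    unfolding qq_def
    by (simp add: bm_integrable bm_cmod2 bm_gu E)
  finally show ?thesis .
qed

definition sampling_ok :: "real set \<Rightarrow> int set \<Rightarrow> real \<Rightarrow> bool" where
  "sampling_ok E Sv A \<longleftrightarrow> (\<forall>g. bm g \<and> (\<forall>x. x \<notin> E \<longrightarrow> g x = 0) \<longrightarrow>
      A * (\<Sum>\<^sub>\<infinity>n\<in>UNIV. (cmod (ft g n))^2) \<le> (\<Sum>\<^sub>\<infinity>n\<in>Sv. (cmod (ft g n))^2))"

lemma samp_gu:
  assumes S: "sampling_ok E Sv A" and A: "A > 0" and E: "E \<in> sets borel"
    and J: "finite J" and T: "T \<subseteq> Sv" and z: "\<And>n. n \<in> T \<Longrightarrow> ft (gu E J u) n = 0"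
  shows "A * (\<Sum>n\<in>J. (cmod (ft (gu E J u) n))^2) \<le> (\<Sum>\<^sub>\<infinity>n\<in>Sv-T. (cmod (ft (gu E J u) n))^2)"
proof -
  let ?f = "\<lambda>n. (cmod (ft (gu E J u) n))^2"
  have "(\<Sum>n\<in>J. ?f n) \<le> (\<Sum>\<^sub>\<infinity>n\<in>UNIV. ?f n)"
    by (rule finite_sum_le_infsum) (auto intro: ft_summable bm_gu E J)
  then have "A * (\<Sum>n\<in>J. ?f n) \<le> A * (\<Sum>\<^sub>\<infinity>n\<in>UNIV. ?f n)"
    using A by simp
  also have "\<dots> \<le> (\<Sum>\<^sub>\<infinity>n\<in>Sv. ?f n)"
    using S bm_gu[OF E] unfolding sampling_ok_def by (auto simp: gu_def iE_def)
  also have "\<dots> = (\<Sum>\<^sub>\<infinity>n\<in>Sv-T. ?f n)"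
    by (rule infsum_cong_neutral) (use z in auto)
  finally show ?thesis .
qed

lemma cs_qq:
  assumes E: "E \<in> sets borel" and J: "finite J"
  shows "(qq E J u)^2 \<le> nJ J u * (\<Sum>n\<in>J. (cmod (ft (gu E J u) n))^2)"
proof -
  have "qq E J u = cmod (\<Sum>n\<in>J. cnj (u n) * ft (gu E J u) n)"
    using qq_ip[OF E J, of u] qq_nonneg[of E J u] by simp
  also have "\<dots> \<le> (\<Sum>n\<in>J. cmod (u n) * cmod (ft (gu E J u) n))"
    by (rule order_trans[OF norm_sum]) (simp add: norm_mult)
  finally have "qq E J u \<le> (\<Sum>n\<in>J. cmod (u n) * cmod (ft (gu E J u) n))" .
  then have "(qq E J u)^2 \<le> (\<Sum>n\<in>J. cmod (u n) * cmod (ft (gu E J u) n))^2"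
    using qq_nonneg by (intro power_mono) auto
  also have "\<dots> \<le> (\<Sum>n\<in>J. (cmod (u n))^2) * (\<Sum>n\<in>J. (cmod (ft (gu E J u) n))^2)"
    by (rule Cauchy_Schwarz_ineq_sum)
  finally show ?thesis unfolding nJ_def .
qed

lemma ft_gu_ip:
  assumes E: "E \<in> sets borel" and J: "finite J"
  shows "ft (gu E J u) n = ipJ J u (\<lambda>m. cnj (ft (iE E) (n - m)))"
  unfolding ft_gu[OF E J] ipJ_def by simp

lemma ipJ_cong_right: "(\<And>m. m \<in> J \<Longrightarrow> b m = b' m) \<Longrightarrow> ipJ J a b = ipJ J a b'"
  unfolding ipJ_def by simp

lemma ipJ_delta:
  assumes "m \<in> J" "finite J"
  shows "ipJ J (\<lambda>j. if j = m then 1 else 0) w = cnj (w m)"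
proof -
  have "ipJ J (\<lambda>j. if j = m then 1 else 0) w = (\<Sum>j\<in>J. if j = m then cnj (w m) else 0)"
    unfolding ipJ_def by (intro sum.cong refl) auto
  also have "\<dots> = cnj (w m)" using assms by (simp add: sum.delta)
  finally show ?thesis .
qed

lemma nJ_delta:
  assumes "m \<in> J" "finite J"
  shows "nJ J (\<lambda>j. if j = m then 1 else 0) = 1"
proof -
  have "nJ J (\<lambda>j. if j = m then 1 else 0) = (\<Sum>j\<in>J. if j = m then 1 else 0)"
    unfolding nJ_def by (intro sum.cong refl) auto
  also have "\<dots> = 1" using assms by (simp add: sum.delta)
  finally show ?thesis .
qed

lemma nJ_one: "orthonormal J W \<Longrightarrow> w \<in> W \<Longrightarrow> nJ J w = 1"
  using nJ_ipJ[of J w] unfolding orthonormal_def by (metis of_real_eq_1_iff)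

lemma amgm: "(q::real) \<ge> 0 \<Longrightarrow> \<eta> > 0 \<Longrightarrow> q \<le> (q^2 / \<eta> + \<eta>) / 2"
proof -
  assume "\<eta> > 0"
  have "0 \<le> (q - \<eta>)^2 / \<eta>" using \<open>\<eta> > 0\<close> by simp
  then show ?thesis using \<open>\<eta> > 0\<close> by (simp add: power2_eq_square field_simps)
qed

lemma counting:
  assumes S: "sampling_ok E Sv A" and A: "A > 0" and E: "E \<in> sets borel" "E \<subseteq> I0"
    and J: "finite J" and T: "finite T" "T \<subseteq> Sv"
    and e: "\<epsilon> > 0" and et: "\<eta> > 0"
    and tau: "\<And>m. m \<in> J \<Longrightarrow> (\<Sum>\<^sub>\<infinity>n\<in>Sv-T. (cmod (ft (iE E) (n - m)))^2) \<le> \<tau>"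
  shows "real (card J) * measure lborel E \<le>
     (1 + \<epsilon>) * real (card T) + (1 + 1/\<epsilon>) * (real (card J) * (\<tau> / (A * \<eta>) + \<eta>) / 2)"
proof -
  define h where "h = ft (iE E)"
  define \<psi> where "\<psi> n = (\<lambda>m. cnj (h (n - m)))" for n
  have xu: "ft (gu E J u) n = ipJ J u (\<psi> n)" for u n
    unfolding \<psi>_def h_def by (rule ft_gu_ip[OF E(1) J])
  obtain W where W: "finite W" "card W \<le> card (\<psi> ` T)" "orthonormal J W"
    and Wexp: "\<forall>\<phi>\<in>\<psi> ` T. \<forall>m\<in>J. \<phi> m = proj J W \<phi> m"
    using gram_schmidt[OF J finite_imageI[OF T(1)]] by blast
  have cardW: "card W \<le> card T" using W(2) card_image_le[OF T(1), of \<psi>] by linarith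
  define \<delta> where "\<delta> m = (\<lambda>j. if j = m then 1 else (0::complex))" for m :: int
  define p where "p m = proj J W (\<delta> m)" for m
  define u' where "u' m = (\<lambda>j. \<delta> m j - p m j)" for m
  have ipd: "ipJ J (\<delta> m) w = cnj (w m)" if "m \<in> J" for m w
    unfolding \<delta>_def using that J by (rule ipJ_delta)
  have u'_ip: "ipJ J (u' m) y = cnj (y m - proj J W y m)" if "m \<in> J" for m y
  proof -
    have "ipJ J (u' m) y = ipJ J (\<delta> m) y - ipJ J (p m) y"
      unfolding u'_def by (rule ipJ_diff_left)
    also have "ipJ J (p m) y = (\<Sum>w\<in>W. cnj (w m) * cnj (ipJ J y w))"
      unfolding p_def ipJ_proj_left using that by (simp add: ipd ipJ_swap[of J _ y])
    also have "ipJ J (\<delta> m) y = cnj (y m)" using ipd[OF that] .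
    finally show ?thesis unfolding proj_def by (simp add: mult.commute)
  qed
  have a: "ft (gu E J (u' m)) n = 0" if "m \<in> J" "n \<in> T" for m n
  proof -
    have "\<psi> n m = proj J W (\<psi> n) m" using Wexp that by auto
    then show ?thesis unfolding xu u'_ip[OF that(1)] by simp
  qed
  have b: "measure lborel E \<le> (1 + \<epsilon>) * qq E J (p m) + (1 + 1/\<epsilon>) * qq E J (u' m)" if "m \<in> J" for m
  proof -
    have "measure lborel E = qq E J (\<delta> m)"
      unfolding \<delta>_def using qq_delta[OF E that J] by simp
    also have "\<delta> m = (\<lambda>j. p m j + u' m j)" unfolding u'_def by auto
    also have "qq E J (\<lambda>j. p m j + u' m j) \<le> (1 + \<epsilon>) * qq E J (p m) + (1 + 1/\<epsilon>) * qq E J (u' m)"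
      by (rule qq_split[OF E(1) e])
    finally show ?thesis .
  qed
  have c: "(\<Sum>m\<in>J. qq E J (p m)) \<le> real (card T)"
  proof -
    have "(\<Sum>m\<in>J. qq E J (p m)) \<le> (\<Sum>m\<in>J. nJ J (p m))"
      by (intro sum_mono qq_le E(1) J)
    also have "\<dots> = (\<Sum>m\<in>J. \<Sum>w\<in>W. (cmod (w m))^2)"
      unfolding p_def by (intro sum.cong refl) (simp add: nJ_proj[OF W(3,1)] ipd)
    also have "\<dots> = (\<Sum>w\<in>W. nJ J w)"
      unfolding nJ_def by (rule sum.swap)
    also have "\<dots> = real (card W)" using nJ_one[OF W(3)] by simp
    finally show ?thesis using cardW by linarith
  qed
  define a where "a m = (\<Sum>\<^sub>\<infinity>n\<in>Sv-T. (cmod (ft (gu E J (u' m)) n))^2)" for m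
  have nu': "nJ J (u' m) \<le> 1" if "m \<in> J" for m
  proof -
    have "nJ J (u' m) = nJ J (\<delta> m) - (\<Sum>w\<in>W. (cmod (ipJ J (\<delta> m) w))^2)"
      unfolding u'_def p_def by (rule nJ_resid[OF W(3,1)])
    also have "nJ J (\<delta> m) = 1" unfolding \<delta>_def using that J by (rule nJ_delta)
    finally show ?thesis by (simp add: sum_nonneg)
  qed
  have d: "A * (qq E J (u' m))^2 \<le> a m" if "m \<in> J" for m
  proof -
    have "(qq E J (u' m))^2 \<le> nJ J (u' m) * (\<Sum>n\<in>J. (cmod (ft (gu E J (u' m)) n))^2)"
      by (rule cs_qq[OF E(1) J])
    also have "\<dots> \<le> 1 * (\<Sum>n\<in>J. (cmod (ft (gu E J (u' m)) n))^2)"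
      by (intro mult_right_mono nu' that sum_nonneg) simp
    finally have "A * (qq E J (u' m))^2 \<le> A * (\<Sum>n\<in>J. (cmod (ft (gu E J (u' m)) n))^2)"
      using A by simp
    also have "\<dots> \<le> a m" unfolding a_def
      by (rule samp_gu[OF S A E(1) J T(2)]) (use a[OF that] in auto)
    finally show ?thesis .
  qed
  define gm where "gm m = (\<lambda>x. iE E x * ee (-m) x)" for m
  have bgm: "bm (gm m)" for m unfolding gm_def by (intro bm_mult bm_iE E(1) bm_ee)
  have hgm: "h (n - m) = ft (gm m) n" for n m
    unfolding h_def gm_def ft_def by (simp add: mult.assoc ee_mult)
  have e_: "(\<Sum>m\<in>J. a m) \<le> real (card J) * \<tau>"
  proof -
    have "(\<Sum>m\<in>J. a m) = (\<Sum>\<^sub>\<infinity>n\<in>Sv-T. \<Sum>m\<in>J. (cmod (ft (gu E J (u' m)) n))^2)"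
      unfolding a_def by (rule infsum_finite_sum(1)[OF J]) (intro ft_summable bm_gu E(1))
    also have "\<dots> \<le> (\<Sum>\<^sub>\<infinity>n\<in>Sv-T. \<Sum>m\<in>J. (cmod (ft (gm m) n))^2)"
    proof (rule infsum_mono)
      show "(\<lambda>n. \<Sum>m\<in>J. (cmod (ft (gu E J (u' m)) n))\<^sup>2) summable_on Sv - T"
        by (rule infsum_finite_sum(2)[OF J]) (intro ft_summable bm_gu E(1))
      show "(\<lambda>n. \<Sum>m\<in>J. (cmod (ft (gm m) n))\<^sup>2) summable_on Sv - T"
        by (rule infsum_finite_sum(2)[OF J]) (intro ft_summable bgm)
      fix n
      have "(\<Sum>m\<in>J. (cmod (ft (gu E J (u' m)) n))^2) = (\<Sum>m\<in>J. (cmod (\<psi> n m - proj J W (\<psi> n) m))^2)"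
        unfolding xu by (intro sum.cong refl) (simp add: u'_ip del: complex_cnj_diff)
      also have "\<dots> = nJ J (\<lambda>m. \<psi> n m - proj J W (\<psi> n) m)" unfolding nJ_def ..
      also have "\<dots> \<le> nJ J (\<psi> n)"
        unfolding nJ_resid[OF W(3,1)] by (simp add: sum_nonneg)
      also have "\<dots> = (\<Sum>m\<in>J. (cmod (ft (gm m) n))^2)"
        unfolding nJ_def \<psi>_def hgm by simp
      finally show "(\<Sum>m\<in>J. (cmod (ft (gu E J (u' m)) n))^2) \<le> (\<Sum>m\<in>J. (cmod (ft (gm m) n))^2)" .
    qed
    also have "\<dots> = (\<Sum>m\<in>J. \<Sum>\<^sub>\<infinity>n\<in>Sv-T. (cmod (ft (gm m) n))^2)"
      by (rule infsum_finite_sum(1)[OF J, symmetric]) (intro ft_summable bgm)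
    also have "\<dots> \<le> (\<Sum>m\<in>J. \<tau>)"
      by (intro sum_mono) (use tau in \<open>simp add: hgm[symmetric] h_def\<close>)
    finally show ?thesis by simp
  qed
  have f: "qq E J (u' m) \<le> (a m / (A * \<eta>) + \<eta>) / 2" if "m \<in> J" for m
  proof -
    have q1: "(qq E J (u' m))^2 \<le> a m / A" using d[OF that] A by (simp add: field_simps)
    have q2: "(qq E J (u' m))^2 / \<eta> \<le> a m / (A * \<eta>)"
      using divide_right_mono[OF q1, of \<eta>] et by (simp add: divide_divide_eq_left)
    have "((qq E J (u' m))^2 / \<eta> + \<eta>) / 2 \<le> (a m / (A * \<eta>) + \<eta>) / 2"
      using q2 by (intro divide_right_mono add_right_mono) auto
    then show ?thesis by (rule order_trans[OF amgm[OF qq_nonneg et]])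
  qed
  have Ssum: "(\<Sum>m\<in>J. (a m / (A * \<eta>) + \<eta>) / 2) \<le> real (card J) * (\<tau> / (A * \<eta>) + \<eta>) / 2"
  proof -
    have "(\<Sum>m\<in>J. (a m / (A * \<eta>) + \<eta>) / 2) = ((\<Sum>m\<in>J. a m) / (A * \<eta>) + real (card J) * \<eta>) / 2"
      by (simp add: sum.distrib sum_divide_distrib[symmetric])
    also have "\<dots> \<le> (real (card J) * \<tau> / (A * \<eta>) + real (card J) * \<eta>) / 2"
      using e_ A et by (simp add: divide_right_mono)
    also have "\<dots> = real (card J) * (\<tau> / (A * \<eta>) + \<eta>) / 2" by (simp add: field_simps)
    finally show ?thesis .
  qed
  have "real (card J) * measure lborel E = (\<Sum>m\<in>J. measure lborel E)" by simp
  also have "\<dots> \<le> (\<Sum>m\<in>J. (1 + \<epsilon>) * qq E J (p m) + (1 + 1/\<epsilon>) * qq E J (u' m))"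
    by (intro sum_mono b)
  also have "\<dots> = (1 + \<epsilon>) * (\<Sum>m\<in>J. qq E J (p m)) + (1 + 1/\<epsilon>) * (\<Sum>m\<in>J. qq E J (u' m))"
    by (simp add: sum.distrib sum_distrib_left)
  also have "\<dots> \<le> (1 + \<epsilon>) * real (card T) + (1 + 1/\<epsilon>) * (\<Sum>m\<in>J. (a m / (A * \<eta>) + \<eta>) / 2)"
    using c e by (intro add_mono mult_left_mono sum_mono f) auto
  also have "\<dots> \<le> (1 + \<epsilon>) * real (card T) + (1 + 1/\<epsilon>) * (real (card J) * (\<tau> / (A * \<eta>) + \<eta>) / 2)"
    using Ssum e by (intro add_left_mono mult_left_mono) auto
  finally show ?thesis .
qed

lemma tail_small:
  fixes f :: "int \<Rightarrow> real"
  assumes nn: "\<And>k. f k \<ge> 0" and sf: "f summable_on UNIV" and d: "\<delta> > 0"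
  shows "\<exists>M::nat. (\<Sum>\<^sub>\<infinity>k\<in>{k. int M < \<bar>k\<bar>}. f k) \<le> \<delta>"
proof -
  have "eventually (\<lambda>F. dist (sum f F) (infsum f UNIV) < \<delta>) (finite_subsets_at_top UNIV)"
    using infsum_tendsto[OF sf] d by (rule tendstoD)
  then obtain X where X: "finite X" and XP: "\<And>Y. finite Y \<Longrightarrow> X \<subseteq> Y \<Longrightarrow> dist (sum f Y) (infsum f UNIV) < \<delta>"
    unfolding eventually_finite_subsets_at_top by auto
  define M where "M = nat (Max (insert 0 (abs ` X)))"
  define Y where "Y = {- int M..int M}"
  have XY: "X \<subseteq> Y"
  proof
    fix x assume "x \<in> X"
    then have "\<bar>x\<bar> \<le> Max (insert 0 (abs ` X))" using X by (intro Max_ge) auto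
    then show "x \<in> Y" unfolding Y_def M_def by auto
  qed
  have Yf: "finite Y" unfolding Y_def by simp
  have close: "infsum f UNIV - sum f Y < \<delta>" using XP[OF Yf XY] by (simp add: dist_real_def)
  have "(\<Sum>\<^sub>\<infinity>k\<in>{k. int M < \<bar>k\<bar>}. f k) \<le> infsum f UNIV - sum f Y"
  proof (rule infsum_le_finite_sums)
    show "f summable_on {k. int M < \<bar>k\<bar>}" by (rule summable_on_subset_banach[OF sf]) simp
    fix F assume F: "finite F" "F \<subseteq> {k. int M < \<bar>k\<bar>}"
    have disj: "F \<inter> Y = {}"
    proof (rule ccontr)
      assume "F \<inter> Y \<noteq> {}"
      then obtain x where "x \<in> F" "x \<in> Y" by blast
      then have "int M < \<bar>x\<bar>" "\<bar>x\<bar> \<le> int M" using F(2) unfolding Y_def by auto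
      then show False by simp
    qed
    have "sum f F + sum f Y = sum f (F \<union> Y)" using F(1) Yf disj by (simp add: sum.union_disjoint)
    also have "\<dots> \<le> infsum f UNIV" by (rule finite_sum_le_infsum[OF sf]) (use F(1) Yf nn in auto)
    finally show "sum f F \<le> infsum f UNIV - sum f Y" by simp
  qed
  then show ?thesis using close by (intro exI[of _ M]) simp
qed

lemma shift_tail:
  fixes f :: "int \<Rightarrow> real"
  assumes nn: "\<And>k. f k \<ge> 0" and sf: "f summable_on UNIV"
    and m: "\<bar>m\<bar> \<le> int N" and sub: "B \<inter> {-(int N + int M)..int N + int M} = {}"
  shows "(\<Sum>\<^sub>\<infinity>n\<in>B. f (n - m)) \<le> (\<Sum>\<^sub>\<infinity>k\<in>{k. int M < \<bar>k\<bar>}. f k)"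
proof -
  have inj: "inj_on (\<lambda>n. n - m) B" by (auto simp: inj_on_def)
  have "(\<Sum>\<^sub>\<infinity>n\<in>B. f (n - m)) = infsum f ((\<lambda>n. n - m) ` B)"
    using infsum_reindex[OF inj, of f] by (simp add: o_def)
  also have "\<dots> \<le> (\<Sum>\<^sub>\<infinity>k\<in>{k. int M < \<bar>k\<bar>}. f k)"
  proof (rule infsum_mono_neutral)
    show "f summable_on (\<lambda>n. n - m) ` B" by (rule summable_on_subset_banach[OF sf]) simp
    show "f summable_on {k. int M < \<bar>k\<bar>}" by (rule summable_on_subset_banach[OF sf]) simp
    fix x assume "x \<in> (\<lambda>n. n - m) ` B - {k. int M < \<bar>k\<bar>}"
    then obtain n where "n \<in> B" "x = n - m" "\<bar>n - m\<bar> \<le> int M" by auto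
    moreover have "n \<in> {-(int N + int M)..int N + int M}" using \<open>\<bar>n - m\<bar> \<le> int M\<close> m by auto
    ultimately have False using sub by blast
    then show "f x \<le> 0" ..
  qed (use nn in auto)
  finally show ?thesis .
qed

lemma measure_le_1:
  assumes "E \<in> sets borel" "E \<subseteq> I0"
  shows "measure lborel E \<le> 1"
proof -
  have "measure lborel E = measure M0 E" using assms by (simp add: measure_restrict_space)
  also have "\<dots> \<le> measure M0 (space M0)" by (rule finite_measure.bounded_measure[OF finite_M0])
  also have "\<dots> = measure lborel I0" by (simp add: measure_restrict_space)
  also have "\<dots> = 1" by (simp add: I0_def)
  finally show ?thesis .
qed

lemma card_sym_int: "card {- int N..int N} = 2 * N + 1"
  by simp

lemma landau_real:
  assumes S: "sampling_ok E Sv A" and A: "A > 0" and E: "E \<in> sets borel" "E \<subseteq> I0"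
    and y: "y < measure lborel E"
  shows "eventually (\<lambda>n::nat. y < real (card (Sv \<inter> {- int n..int n})) / (2 * real n)) sequentially"
proof -
  define \<mu> where "\<mu> = measure lborel E"
  have mu1: "\<mu> \<le> 1" unfolding \<mu>_def by (rule measure_le_1[OF E])
  define \<delta> where "\<delta> = min 1 ((\<mu> - y) / 8)"
  have d0: "\<delta> > 0" and d1: "\<delta> \<le> 1" and d8: "8 * \<delta> \<le> \<mu> - y"
    using y unfolding \<delta>_def \<mu>_def by (auto simp: min_def)
  define f where "f k = (cmod (ft (iE E) k))^2" for k
  have fnn: "\<And>k. f k \<ge> 0" unfolding f_def by simp
  have fs: "f summable_on UNIV" unfolding f_def by (intro ft_summable bm_iE E(1))
  have "A * \<delta>^4 > 0" using A d0 by simp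
  from tail_small[OF fnn fs this] obtain M :: nat where
    tM: "(\<Sum>\<^sub>\<infinity>k\<in>{k. int M < \<bar>k\<bar>}. f k) \<le> A * \<delta>^4" by blast
  define t where "t = (\<Sum>\<^sub>\<infinity>k\<in>{k. int M < \<bar>k\<bar>}. f k)"
  have t0: "t \<ge> 0" unfolding t_def by (intro infsum_nonneg fnn)
  define n0 where "n0 = M + nat \<lceil>real M / \<delta>\<rceil> + 1"
  show ?thesis
  proof (rule eventually_sequentiallyI[of n0])
    fix n assume n: "n0 \<le> n"
    define N where "N = n - M"
    have nMN: "n = N + M" using n unfolding n0_def N_def by simp
    define J where "J = {- int N..int N}"
    define T where "T = Sv \<inter> {- int n..int n}"
    have cJ: "real (card J) = 2 * real N + 1" unfolding J_def by simp
    have count: "real (card J) * \<mu> \<le>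
       (1 + \<delta>) * real (card T) + (1 + 1/\<delta>) * (real (card J) * (t / (A * \<delta>^2) + \<delta>^2) / 2)"
      unfolding \<mu>_def
    proof (rule counting[OF S A E])
      show "finite J" unfolding J_def by simp
      show "finite T" "T \<subseteq> Sv" unfolding T_def by auto
      show "\<delta> > 0" "\<delta>^2 > 0" using d0 by auto
      fix m assume "m \<in> J"
      then have m: "\<bar>m\<bar> \<le> int N" unfolding J_def by auto
      show "(\<Sum>\<^sub>\<infinity>k\<in>Sv - T. (cmod (ft (iE E) (k - m)))\<^sup>2) \<le> t"
        unfolding t_def f_def[symmetric]
        by (rule shift_tail[OF fnn fs m]) (auto simp: T_def nMN)
    qed
    have "t / (A * \<delta>^2) \<le> \<delta>^2"
      using tM A d0 unfolding t_def[symmetric] by (simp add: field_simps power2_eq_square power4_eq_xxxx)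
    then have "(1 + 1/\<delta>) * (real (card J) * (t / (A * \<delta>^2) + \<delta>^2) / 2) \<le>
               (1 + 1/\<delta>) * (real (card J) * (\<delta>^2 + \<delta>^2) / 2)"
      using d0 by (intro mult_left_mono divide_right_mono mult_left_mono add_right_mono) auto
    also have "\<dots> = real (card J) * (\<delta> + \<delta>^2)"
      using d0 by (simp add: field_simps power2_eq_square)
    also have "\<dots> \<le> real (card J) * (2 * \<delta>)"
      using d0 d1 by (intro mult_left_mono) (auto simp: power2_eq_square mult_le_cancel_left1)
    finally have "real (card J) * \<mu> \<le> (1 + \<delta>) * real (card T) + real (card J) * (2 * \<delta>)"
      using count by linarith
    then have c1: "real (card J) * (\<mu> - 2 * \<delta>) \<le> (1 + \<delta>) * real (card T)"
      by (simp add: algebra_simps)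
    have "(\<mu> - 3 * \<delta>) * (1 + \<delta>) \<le> \<mu> - 2 * \<delta>"
    proof -
      have "\<mu> * \<delta> \<le> 1 * \<delta>" using mu1 d0 by (intro mult_right_mono) auto
      moreover have eq: "(\<mu> - 3*\<delta>)*(1+\<delta>) = \<mu> - 2*\<delta> + (\<mu>*\<delta> - \<delta>) - 3*\<delta>^2"
        by (simp add: algebra_simps power2_eq_square)
      moreover have "\<delta>^2 \<ge> 0" by simp
      ultimately show ?thesis by linarith
    qed
    then have "real (card J) * (\<mu> - 3 * \<delta>) * (1 + \<delta>) \<le> real (card J) * (\<mu> - 2 * \<delta>)"
      by (metis mult.assoc mult_left_mono of_nat_0_le_iff)
    with c1 have "real (card J) * (\<mu> - 3 * \<delta>) * (1 + \<delta>) \<le> real (card T) * (1 + \<delta>)"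
      by (simp add: mult.commute)
    then have cT: "real (card J) * (\<mu> - 3 * \<delta>) \<le> real (card T)"
      using d0 by (simp add: mult_le_cancel_right)
    define c where "c = \<mu> - 3 * \<delta>"
    have cy: "c - y \<ge> 5 * \<delta>" unfolding c_def using d8 by simp
    have npos: "real n > 0" using n unfolding n0_def by simp
    have ratio_nn: "0 \<le> real (card T) / (2 * real n)" by simp
    have "y < real (card T) / (2 * real n)"
    proof (cases "c \<le> 0")
      case True
      then show ?thesis using cy d0 ratio_nn by linarith
    next
      case False
      have c1': "c \<le> 1" unfolding c_def using mu1 d0 by simp
      have "real M / \<delta> < real n"
      proof -
        have "real M / \<delta> \<le> real (nat \<lceil>real M / \<delta>\<rceil>)" by linarith
        then show ?thesis using n unfolding n0_def by simp
      qed
      then have Mn: "real M < \<delta> * real n" using d0 by (simp add: field_simps)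
      have "c * (2 * real N) \<le> real (card T)"
      proof -
        have "c * (2 * real N) \<le> c * real (card J)" using False cJ by (intro mult_left_mono) auto
        moreover have "c * real (card J) \<le> real (card T)" using cT unfolding c_def by (simp add: mult.commute)
        ultimately show ?thesis by linarith
      qed
      then have "c * real N / real n \<le> real (card T) / (2 * real n)"
        using npos by (simp add: field_simps)
      moreover have "c * real N / real n = c - c * real M / real n"
        using npos nMN by (simp add: field_simps)
      moreover have "c * real M / real n \<le> real M / real n"
        using c1' False npos by (simp add: divide_right_mono mult_left_le_one_le)
      moreover have "real M / real n < \<delta>" using Mn npos by (simp add: field_simps)
      ultimately show ?thesis using cy d0 by linarith
    qed
    then show "y < real (card (Sv \<inter> {- int n..int n})) / (2 * real n)" unfolding T_def .
  qed
qed

lemma landau: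
  assumes S: "sampling_ok E Sv A" and A: "A > 0" and E: "E \<in> sets borel" "E \<subseteq> I0"
  shows "ereal (measure lborel E) \<le> R_D Sv"
  unfolding R_D_def le_Liminf_iff
proof (intro allI impI)
  fix y :: ereal assume y: "y < ereal (measure lborel E)"
  show "eventually (\<lambda>n. y < ereal (real (card (Sv \<inter> {- int n..int n})) / (2 * real n))) sequentially"
  proof (cases y)
    case (real r)
    then show ?thesis using landau_real[OF S A E, of r] y by simp
  next
    case PInf then show ?thesis using y by simp
  next
    case MInf then show ?thesis by simp
  qed
qed

definition colv :: "real^'n^'n \<Rightarrow> 'n set \<Rightarrow> 'n \<Rightarrow> real^'n" where
  "colv U A i = (\<chi> w. if w \<in> A then U$w$i else 0)"

lemma sub_rank_colv: "sub_rank U A C = dim (colv U A ` C)"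
  unfolding sub_rank_def colv_def ..

lemma colv_split:
  assumes "v \<in> Sp"
  shows "colv U Sp i = colv U (Sp - {v}) i + (U$v$i) *\<^sub>R axis v 1"
  using assms unfolding colv_def by (vector axis_def)

lemma full_rank_sub:
  fixes U :: "real^'n^'n"
  assumes full: "dim (colv U Sp ` I) = card I" and P: "P \<subseteq> I"
  shows "inj_on (colv U Sp) P" "independent (colv U Sp ` P)" "dim (colv U Sp ` P) = card P"
proof -
  have fI: "finite I" by simp
  have "dim (colv U Sp ` I) \<le> card (colv U Sp ` I)" by (rule dim_le_card') simp
  moreover have "card (colv U Sp ` I) \<le> card I" by (rule card_image_le[OF fI])
  ultimately have c: "card (colv U Sp ` I) = card I" and d: "dim (colv U Sp ` I) = card (colv U Sp ` I)"
    using full by linarith+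
  have injI: "inj_on (colv U Sp) I" by (rule eq_card_imp_inj_on[OF fI c])
  have indI: "independent (colv U Sp ` I)"
    using card_eq_dim[of "colv U Sp ` I" "colv U Sp ` I"] d span_superset[of "colv U Sp ` I"] by simp
  show inj: "inj_on (colv U Sp) P" using injI P by (rule inj_on_subset)
  show ind: "independent (colv U Sp ` P)" using indI image_mono[OF P] by (rule independent_mono)
  show "dim (colv U Sp ` P) = card P"
    using dim_eq_card_independent[OF ind] card_image[OF inj] by simp
qed

lemma rank_drop:
  fixes U :: "real^'n^'n"
  assumes v: "v \<in> Sp" and full: "dim (colv U Sp ` I) = card I" and P: "P \<subseteq> I"
  shows "card P \<le> dim (colv U (Sp - {v}) ` P) + 1"
proof -
  have "colv U Sp ` P \<subseteq> span (insert (axis v 1) (colv U (Sp - {v}) ` P))"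
  proof
    fix x assume "x \<in> colv U Sp ` P"
    then obtain i where i: "i \<in> P" "x = colv U Sp i" by auto
    show "x \<in> span (insert (axis v 1) (colv U (Sp - {v}) ` P))"
      unfolding i colv_split[OF v]
      by (intro span_add span_scale span_base) (use i in auto)
  qed
  then have "dim (colv U Sp ` P) \<le> dim (insert (axis v 1) (colv U (Sp - {v}) ` P))"
    by (rule dim_mono)
  also have "\<dots> \<le> dim (colv U (Sp - {v}) ` P) + 1"
    by (simp add: dim_insert)
  finally show ?thesis using full_rank_sub(3)[OF full P] by simp
qed

lemma kernel_vec:
  fixes U :: "real^'n^'n"
  assumes v: "v \<in> Sp" and full: "dim (colv U Sp ` I) = card I" and P: "P \<subseteq> I"
    and lt: "dim (colv U (Sp - {v}) ` P) < card P"
  shows "\<exists>c::'n \<Rightarrow> real. (\<forall>i. i \<notin> P \<longrightarrow> c i = 0) \<and>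
      (\<forall>w\<in>Sp - {v}. (\<Sum>i\<in>P. U$w$i * c i) = 0) \<and> (\<Sum>i\<in>P. U$v$i * c i) = 1"
proof -
  let ?Y = "colv U (Sp - {v}) ` P" and ?Z = "colv U Sp ` P" and ?e = "axis v (1::real)"
  have ZT: "?Z \<subseteq> span (insert ?e ?Y)"
  proof
    fix x assume "x \<in> ?Z"
    then obtain i where i: "i \<in> P" "x = colv U Sp i" by auto
    show "x \<in> span (insert ?e ?Y)"
      unfolding i colv_split[OF v]
      by (intro span_add span_scale span_base) (use i in auto)
  qed
  have "dim (span (insert ?e ?Y)) \<le> dim ?Y + 1" by (simp add: dim_insert)
  also have "\<dots> \<le> card P" using lt by simp
  also have "\<dots> = dim ?Z" using full_rank_sub(3)[OF full P] by simp
  finally have "span ?Z = span (span (insert ?e ?Y))" by (rule dim_eq_span[OF ZT])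
  then have "?e \<in> span ?Z" by (simp add: span_base)
  moreover have fZ: "finite ?Z" by simp
  ultimately obtain u where u: "(\<Sum>z\<in>?Z. u z *\<^sub>R z) = ?e"
    unfolding span_finite[OF fZ] by auto
  have inj: "inj_on (colv U Sp) P" by (rule full_rank_sub(1)[OF full P])
  define c where "c i = (if i \<in> P then u (colv U Sp i) else 0)" for i
  have sumP: "(\<Sum>i\<in>P. c i *\<^sub>R colv U Sp i) = ?e"
    unfolding u[symmetric] sum.reindex[OF inj] c_def by (simp add: o_def)
  have comp: "(\<Sum>i\<in>P. U$w$i * c i) = ?e $ w" if "w \<in> Sp" for w
  proof -
    have "?e $ w = (\<Sum>i\<in>P. c i *\<^sub>R colv U Sp i) $ w" using sumP by simp
    also have "\<dots> = (\<Sum>i\<in>P. c i * U$w$i)" using that by (simp add: colv_def sum_component)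
    finally show ?thesis by (simp add: mult.commute)
  qed
  show ?thesis
  proof (intro exI[of _ c] conjI ballI allI impI)
    show "\<And>i. i \<notin> P \<Longrightarrow> c i = 0" unfolding c_def by simp
    fix w assume "w \<in> Sp - {v}"
    then show "(\<Sum>i\<in>P. U$w$i * c i) = 0" using comp[of w] by (simp add: axis_def)
  next
    show "(\<Sum>i\<in>P. U$v$i * c i) = 1" using comp[OF v] by (simp add: axis_def)
  qed
qed

lemma Iset_meas:
  fixes F :: "'n::finite \<Rightarrow> real set"
  assumes F: "\<And>i. F i \<in> sets borel"
  shows "Iset F \<in> borel \<rightarrow>\<^sub>M count_space UNIV"
proof (subst measurable_count_space_eq2)
  show "finite (UNIV :: 'n set set)" by simp
  show "Iset F \<in> space borel \<rightarrow> UNIV \<and> (\<forall>a\<in>UNIV. Iset F -` {a} \<inter> space borel \<in> sets borel)"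
  proof (intro conjI ballI)
    fix P :: "'n set"
    have "Iset F -` {P} \<inter> space borel = (\<Inter>i\<in>UNIV. if i \<in> P then F i else UNIV - F i)"
      unfolding Iset_def by (auto split: if_splits)
    also have "\<dots> \<in> sets borel"
      using F by (intro sets.finite_INT) auto
    finally show "Iset F -` {P} \<inter> space borel \<in> sets borel" .
  qed auto
qed

lemma Iset_comp_meas:
  fixes F :: "'n::finite \<Rightarrow> real set"
  assumes F: "\<And>i. F i \<in> sets borel"
  shows "(\<lambda>f. \<phi> (Iset F f)) \<in> borel_measurable borel"
  using measurable_compose[OF Iset_meas[OF F], of \<phi>] by (simp add: o_def)

lemma Iset_pred_sets:
  fixes F :: "'n::finite \<Rightarrow> real set"
  assumes F: "\<And>i. F i \<in> sets borel"
  shows "{f. Q (Iset F f)} \<in> sets borel"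
proof -
  have "{f. Q (Iset F f)} = Iset F -` {P. Q P} \<inter> space borel" by auto
  also have "\<dots> \<in> sets borel" by (rule measurable_sets[OF Iset_meas[OF F]]) simp
  finally show ?thesis .
qed

lemma set_int_sub_I0:
  fixes g :: "real \<Rightarrow> real"
  assumes "U0 \<subseteq> I0"
  shows "set_lebesgue_integral lborel U0 g = (\<integral>x. indicator U0 x * g x \<partial>M0)"
proof -
  have "(\<integral>x. indicator U0 x * g x \<partial>M0) = (\<integral>x. indicator I0 x *\<^sub>R (indicator U0 x * g x) \<partial>lborel)"
    by (rule integral_restrict_space) simp
  also have "\<dots> = set_lebesgue_integral lborel U0 g"
    unfolding set_lebesgue_integral_def using assms
    by (intro Bochner_Integration.integral_cong refl) (auto simp: indicator_def)
  finally show ?thesis by simp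
qed

lemma M0_integrable_real:
  fixes g :: "real \<Rightarrow> real"
  assumes "g \<in> borel_measurable borel" "\<And>x. \<bar>g x\<bar> \<le> B"
  shows "integrable M0 g"
  by (rule finite_measure.integrable_const_bound[OF finite_M0, of _ B])
     (use assms in \<open>auto intro: measurable_restrict_space1\<close>)

lemma int_M0_indicator:
  assumes "A \<in> sets borel" "A \<subseteq> I0"
  shows "(\<integral>x. indicator A x \<partial>M0) = measure lborel A"
proof -
  have EM: "A \<in> sets M0" using assms by (simp add: sets_restrict_space_iff)
  have "(\<integral>x. indicator A x \<partial>M0) = measure M0 A"
    using EM finite_measure.emeasure_finite[OF finite_M0, of A] assms(2) by (simp add: integral_indicator top.not_eq_extremum Int_absorb2)
  also have "\<dots> = measure lborel A" using assms by (intro measure_restrict_space) auto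
  finally show ?thesis .
qed

lemma sum_ind_card:
  fixes F :: "'n::finite \<Rightarrow> real set"
  shows "(\<Sum>i\<in>UNIV. indicator (F i) f :: real) = real (card (Iset F f))"
proof -
  have "(\<Sum>i\<in>(UNIV::'n::finite set). indicator (F i) f :: real) = (\<Sum>i\<in>UNIV. indicator {i. f \<in> F i} i)"
    by (intro sum.cong refl) (simp add: indicator_def)
  also have "\<dots> = real (card (UNIV \<inter> {i. f \<in> F i}))" unfolding indicator_def by (simp add: sum.If_cases)
  finally show ?thesis by (simp add: Iset_def)
qed

lemma rhs_le:
  fixes U :: "real^'n^'n" and F :: "'n \<Rightarrow> real set"
  assumes F: "\<forall>i. F i \<in> sets lborel \<and> F i \<subseteq> {-1/2..<1/2}"
    and full: "dim (colv U Sp ` Iall F) = card (Iall F)" and v: "v \<in> Sp"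
  shows "(\<Sum>i\<in>UNIV. measure lborel (F i)) - (LINT f:(\<Union>i. F i)|lborel. real (sub_rank U (Sp - {v}) (Iset F f)))
     \<le> measure lborel {f. f \<in> I0 \<and> sub_rank U (Sp - {v}) (Iset F f) < card (Iset F f)}"
proof -
  define E where "E = {f. f \<in> I0 \<and> sub_rank U (Sp - {v}) (Iset F f) < card (Iset F f)}"
  define U0 where "U0 = (\<Union>i. F i)"
  have Fb: "\<And>i. F i \<in> sets borel" using F by simp
  have FI: "\<And>i. F i \<subseteq> I0" using F by (simp add: I0_def)
  have U0b: "U0 \<in> sets borel" unfolding U0_def using Fb by auto
  have U0I: "U0 \<subseteq> I0" unfolding U0_def using FI by auto
  have Eb: "E \<in> sets borel"
  proof -
    have "E = I0 \<inter> {f. sub_rank U (Sp - {v}) (Iset F f) < card (Iset F f)}" unfolding E_def by auto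
    also have "\<dots> \<in> sets borel" by (intro sets.Int I0_sets Iset_pred_sets Fb)
    finally show ?thesis .
  qed
  have EI: "E \<subseteq> I0" unfolding E_def by auto
  define r where "r f = real (sub_rank U (Sp - {v}) (Iset F f))" for f
  define k where "k f = real (card (Iset F f))" for f
  have rm: "r \<in> borel_measurable borel" unfolding r_def by (rule Iset_comp_meas[OF Fb])
  have km: "k \<in> borel_measurable borel" unfolding k_def by (rule Iset_comp_meas[OF Fb])
  have rb: "\<bar>r f\<bar> \<le> real CARD('n)" for f
    unfolding r_def sub_rank_colv using dim_subset_UNIV_cart by simp
  have kb: "\<bar>k f\<bar> \<le> real CARD('n)" for f
    unfolding k_def by (simp add: card_mono)
  have iU: "integrable M0 (\<lambda>x. indicator U0 x * r x)"
    by (rule M0_integrable_real[where B="real CARD('n)"]) (use rm U0b rb in \<open>auto simp: indicator_def\<close>)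
  have iK: "integrable M0 (\<lambda>x. indicator U0 x * k x)"
    by (rule M0_integrable_real[where B="real CARD('n)"]) (use km U0b kb in \<open>auto simp: indicator_def\<close>)
  have s1: "(\<Sum>i\<in>UNIV. measure lborel (F i)) = (\<integral>x. indicator U0 x * k x \<partial>M0)"
  proof -
    have "(\<Sum>i\<in>UNIV. measure lborel (F i)) = (\<Sum>i\<in>UNIV. (\<integral>x. indicator (F i) x \<partial>M0))"
      by (intro sum.cong refl int_M0_indicator[symmetric] Fb FI)
    also have "\<dots> = (\<integral>x. (\<Sum>i\<in>UNIV. indicator (F i) x) \<partial>M0)"
      by (rule Bochner_Integration.integral_sum[symmetric])
         (rule M0_integrable_real[where B=1]; use Fb in auto)
    also have "\<dots> = (\<integral>x. indicator U0 x * k x \<partial>M0)"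
    proof (intro Bochner_Integration.integral_cong refl)
      fix x
      show "(\<Sum>i\<in>UNIV. indicator (F i) x) = indicator U0 x * k x"
        unfolding sum_ind_card k_def U0_def by (auto simp: indicator_def Iset_def)
    qed
    finally show ?thesis .
  qed
  have s2: "(LINT f:(\<Union>i. F i)|lborel. r f) = (\<integral>x. indicator U0 x * r x \<partial>M0)"
    unfolding U0_def[symmetric] by (rule set_int_sub_I0[OF U0I])
  have "(\<integral>x. indicator U0 x * k x \<partial>M0) - (\<integral>x. indicator U0 x * r x \<partial>M0)
      = (\<integral>x. indicator U0 x * k x - indicator U0 x * r x \<partial>M0)"
    by (rule Bochner_Integration.integral_diff[OF iK iU, symmetric])
  also have "\<dots> \<le> (\<integral>x. indicator E x \<partial>M0)"
  proof (rule integral_mono)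
    show "integrable M0 (\<lambda>x. indicator U0 x * k x - indicator U0 x * r x)"
      using iK iU by simp
    show "integrable M0 (indicator E :: real \<Rightarrow> real)"
      by (rule M0_integrable_real[where B=1]) (use Eb in auto)
    fix x assume x: "x \<in> space M0"
    then have xI: "x \<in> I0" by simp
    have P: "Iset F x \<subseteq> Iall F" unfolding Iall_def I0_def[symmetric] using xI by auto
    show "indicator U0 x * k x - indicator U0 x * r x \<le> indicator E x"
    proof (cases "x \<in> E")
      case True
      have "card (Iset F x) \<le> dim (colv U (Sp - {v}) ` Iset F x) + 1"
        by (rule rank_drop[OF v full P])
      then have "k x - r x \<le> 1" unfolding k_def r_def sub_rank_colv by simp
      then show ?thesis using True by (cases "x \<in> U0") (auto simp: indicator_def algebra_simps)
    next
      case False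
      then have "k x \<le> r x" using xI unfolding E_def k_def r_def by auto
      then show ?thesis using False by (cases "x \<in> U0") (auto simp: indicator_def)
    qed
  qed
  also have "\<dots> = measure lborel E" by (rule int_M0_indicator[OF Eb EI])
  finally show ?thesis unfolding s1 s2[unfolded r_def] E_def[symmetric] r_def .
qed

lemma sum_restrict_support:
  fixes c :: "'n::finite \<Rightarrow> real"
  assumes "\<forall>i. i \<notin> P \<longrightarrow> c i = 0"
  shows "(\<Sum>i\<in>UNIV. a i * c i) = (\<Sum>i\<in>P. a i * c i)"
  by (rule sum.mono_neutral_right) (use assms in auto)

lemma samp_from_stable:
  fixes U :: "real^'n^'n" and F :: "'n \<Rightarrow> real set"
  assumes F: "\<forall>i. F i \<in> sets lborel \<and> F i \<subseteq> {-1/2..<1/2}"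
    and full: "dim (colv U Sp ` Iall F) = card (Iall F)"
    and SS: "S \<subseteq> Sp \<times> UNIV"
    and st: "stable_sampling U F S A A'"
    and v: "v \<in> Sp"
  shows "sampling_ok {f. f \<in> I0 \<and> sub_rank U (Sp - {v}) (Iset F f) < card (Iset F f)} {n. (v, n) \<in> S} A"
  unfolding sampling_ok_def
proof (intro allI impI, elim conjE)
  define E where "E = {f. f \<in> I0 \<and> sub_rank U (Sp - {v}) (Iset F f) < card (Iset F f)}"
  fix g :: "real \<Rightarrow> complex"
  assume bg: "bm g" and gE0: "\<forall>x. x \<notin> {f. f \<in> I0 \<and> sub_rank U (Sp - {v}) (Iset F f) < card (Iset F f)} \<longrightarrow> g x = 0"
  then have gE: "\<And>x. x \<notin> E \<Longrightarrow> g x = 0" unfolding E_def by auto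
  have Fb: "\<And>i. F i \<in> sets borel" using F by simp
  have FI: "\<And>i. F i \<subseteq> I0" using F by (simp add: I0_def)
  have Eb: "E \<in> sets borel"
  proof -
    have "E = I0 \<inter> {f. sub_rank U (Sp - {v}) (Iset F f) < card (Iset F f)}" unfolding E_def by auto
    also have "\<dots> \<in> sets borel" by (intro sets.Int I0_sets Iset_pred_sets Fb)
    finally show ?thesis .
  qed
  define Cc where "Cc P c \<longleftrightarrow> (\<forall>i. i \<notin> P \<longrightarrow> c i = 0) \<and>
      (\<forall>w\<in>Sp - {v}. (\<Sum>i\<in>P. U$w$i * c i) = 0) \<and> (\<Sum>i\<in>P. U$v$i * c i) = 1" for P and c :: "'n \<Rightarrow> real"
  define C where "C P = (SOME c. Cc P c)" for P
  have CE: "Cc (Iset F f) (C (Iset F f))" if "f \<in> E" for f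
  proof -
    have xI: "f \<in> I0" and lt: "sub_rank U (Sp - {v}) (Iset F f) < card (Iset F f)" using that unfolding E_def by auto
    have P: "Iset F f \<subseteq> Iall F" unfolding Iall_def I0_def[symmetric] using xI by auto
    have "\<exists>c. Cc (Iset F f) c" unfolding Cc_def
      by (rule kernel_vec[OF v full P]) (use lt in \<open>simp add: sub_rank_colv\<close>)
    then show ?thesis unfolding C_def by (rule someI_ex)
  qed
  define cc where "cc i f = indicator E f * C (Iset F f) i" for i f
  have ccm: "cc i \<in> borel_measurable borel" for i
    unfolding cc_def by (intro borel_measurable_times borel_measurable_indicator Eb Iset_comp_meas Fb)
  have ccb: "\<bar>cc i f\<bar> \<le> (\<Sum>P\<in>UNIV. \<bar>C P i\<bar>)" for i f
  proof -
    have "\<bar>cc i f\<bar> \<le> \<bar>C (Iset F f) i\<bar>" unfolding cc_def by (simp add: indicator_def)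
    also have "\<dots> \<le> (\<Sum>P\<in>UNIV. \<bar>C P i\<bar>)" by (rule member_le_sum) auto
    finally show ?thesis .
  qed
  have bcc: "bm (\<lambda>f. complex_of_real (cc i f))" for i
    unfolding bm_def
  proof
    show "(\<lambda>f. complex_of_real (cc i f)) \<in> borel_measurable M0"
      using ccm[of i] by (intro measurable_restrict_space1) measurable
    show "\<exists>B. \<forall>x. cmod (complex_of_real (cc i x)) \<le> B" using ccb by auto
  qed
  define G where "G i f = complex_of_real (cc i f) * g f" for i f
  have bG: "bm (G i)" for i unfolding G_def by (intro bm_mult bcc bg)
  have g_eq: "g = (\<lambda>x. indicator I0 x *\<^sub>R g x)"
    using gE unfolding E_def by (auto simp: indicator_def fun_eq_iff)
  have gm: "g \<in> borel_measurable lborel"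
  proof -
    have "(\<lambda>x. indicator I0 x *\<^sub>R g x) \<in> borel_measurable lborel"
      using bm_meas[OF bg] borel_measurable_restrict_space_iff[of I0 lborel g] by simp
    then show ?thesis using g_eq by simp
  qed
  have Gm: "G i \<in> borel_measurable lborel" for i
    unfolding G_def using gm ccm[of i] by measurable
  define X where "X w n = (\<Sum>i\<in>UNIV. complex_of_real (U$w$i) * idtft (G i) n)" for w n
  define \<phi> where "\<phi> w f = (\<Sum>i\<in>UNIV. complex_of_real (U$w$i) * G i f)" for w f
  have b\<phi>: "bm (\<phi> w)" for w unfolding \<phi>_def by (intro bm_sum bm_mult bm_const bG)
  have X\<phi>: "X w n = ft (\<phi> w) n" for w n
  proof -
    have "ft (\<phi> w) n = (\<Sum>i\<in>UNIV. ft (\<lambda>f. complex_of_real (U$w$i) * G i f) n)"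
      unfolding \<phi>_def by (rule ft_sum) (auto intro: bm_mult bm_const bG)
    also have "\<dots> = (\<Sum>i\<in>UNIV. complex_of_real (U$w$i) * ft (G i) n)"
      by (intro sum.cong refl ft_cmult bG)
    finally show ?thesis unfolding X_def idtft_ft by simp
  qed
  have \<phi>_form: "\<phi> w f = complex_of_real (\<Sum>i\<in>UNIV. U$w$i * cc i f) * g f" for w f
    unfolding \<phi>_def G_def by (simp add: sum_distrib_right mult.assoc)
  have \<phi>v: "\<phi> v = g"
  proof
    fix f show "\<phi> v f = g f"
    proof (cases "f \<in> E")
      case True
      have supp: "\<forall>i. i \<notin> Iset F f \<longrightarrow> C (Iset F f) i = 0" using CE[OF True] unfolding Cc_def by blast
      have "(\<Sum>i\<in>UNIV. U$v$i * cc i f) = (\<Sum>i\<in>UNIV. U$v$i * C (Iset F f) i)"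
        unfolding cc_def using True by simp
      also have "\<dots> = (\<Sum>i\<in>Iset F f. U$v$i * C (Iset F f) i)"
        by (rule sum_restrict_support[OF supp])
      also have "\<dots> = 1" using CE[OF True] unfolding Cc_def by simp
      finally show ?thesis unfolding \<phi>_form by simp
    next
      case False then show ?thesis unfolding \<phi>_form using gE by simp
    qed
  qed
  have \<phi>w: "\<phi> w = (\<lambda>_. 0)" if w: "w \<in> Sp - {v}" for w
  proof
    fix f show "\<phi> w f = 0"
    proof (cases "f \<in> E")
      case True
      have supp: "\<forall>i. i \<notin> Iset F f \<longrightarrow> C (Iset F f) i = 0" using CE[OF True] unfolding Cc_def by blast
      have "(\<Sum>i\<in>UNIV. U$w$i * cc i f) = (\<Sum>i\<in>UNIV. U$w$i * C (Iset F f) i)"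
        unfolding cc_def using True by simp
      also have "\<dots> = (\<Sum>i\<in>Iset F f. U$w$i * C (Iset F f) i)"
        by (rule sum_restrict_support[OF supp])
      also have "\<dots> = 0" using CE[OF True] w unfolding Cc_def by simp
      finally show ?thesis unfolding \<phi>_form by simp
    next
      case False then show ?thesis unfolding \<phi>_form using gE by simp
    qed
  qed
  have Xv: "X v n = ft g n" for n unfolding X\<phi> \<phi>v ..
  have Xw: "X w n = 0" if "w \<in> Sp - {v}" for w n unfolding X\<phi> \<phi>w[OF that] ft_def by simp
  have BL: "BL_D U F X"
    unfolding BL_D_def
  proof (intro conjI allI exI[of _ G] ballI)
    fix w show "(\<lambda>n. (cmod (X w n))^2) summable_on UNIV"
      unfolding X\<phi> by (rule ft_summable[OF b\<phi>])
  next
    fix i show "G i \<in> borel_measurable lborel" by (rule Gm)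
  next
    fix i show "set_integrable lborel {-1/2..<1/2} (\<lambda>f. (cmod (G i f))^2)"
      unfolding I0_def[symmetric] set_integrable_I0 by (intro bm_integrable bm_cmod2 bG)
  next
    fix i f assume f: "f \<in> {-1/2..<1/2} - F i"
    show "G i f = 0"
    proof (cases "f \<in> E")
      case True
      have "i \<notin> Iset F f" using f unfolding Iset_def by auto
      then show ?thesis using CE[OF True] unfolding G_def cc_def Cc_def by simp
    next
      case False then show ?thesis unfolding G_def cc_def by simp
    qed
  next
    fix w n show "X w n = (\<Sum>i\<in>UNIV. complex_of_real (U$w$i) * idtft (G i) n)" unfolding X_def ..
  qed
  from st BL have A0: "0 < A" and ineq: "A * energy_on X UNIV \<le> energy_on X S"
    unfolding stable_sampling_def by auto
  let ?h = "\<lambda>(w, n). (cmod (X w n))^2"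
  have sumU: "?h summable_on UNIV"
  proof -
    have "?h summable_on (\<Union>w\<in>UNIV. Pair w ` UNIV)"
    proof (rule summable_on_finite_union_disjoint)
      fix w :: 'n
      have "(?h \<circ> Pair w) summable_on UNIV"
        unfolding o_def X\<phi> by (simp add: ft_summable[OF b\<phi>])
      then show "?h summable_on Pair w ` UNIV"
        by (subst summable_on_reindex) (auto simp: inj_on_def)
    qed auto
    moreover have "(\<Union>w\<in>UNIV. Pair w ` UNIV) = (UNIV :: ('n \<times> int) set)" by auto
    ultimately show ?thesis by simp
  qed
  have eS: "energy_on X S = (\<Sum>\<^sub>\<infinity>n\<in>{n. (v, n) \<in> S}. (cmod (ft g n))^2)"
  proof -
    have "energy_on X S = infsum ?h (Pair v ` {n. (v, n) \<in> S})"
      unfolding energy_on_def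
    proof (rule infsum_cong_neutral)
      fix x assume "x \<in> S - Pair v ` {n. (v, n) \<in> S}"
      then obtain w n where x: "x = (w, n)" "(w, n) \<in> S" "w \<noteq> v" by (cases x) auto
      then have "w \<in> Sp - {v}" using SS by auto
      then show "?h x = 0" using x Xw by simp
    qed auto
    also have "\<dots> = infsum (?h \<circ> Pair v) {n. (v, n) \<in> S}"
      by (rule infsum_reindex) (auto simp: inj_on_def)
    finally show ?thesis by (simp add: o_def Xv)
  qed
  have eU: "(\<Sum>\<^sub>\<infinity>n\<in>UNIV. (cmod (ft g n))^2) \<le> energy_on X UNIV"
  proof -
    have "(\<Sum>\<^sub>\<infinity>n\<in>UNIV. (cmod (ft g n))^2) = infsum (?h \<circ> Pair v) UNIV"
      by (simp add: o_def Xv)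
    also have "\<dots> = infsum ?h (Pair v ` UNIV)"
      by (rule infsum_reindex[symmetric]) (auto simp: inj_on_def)
    also have "\<dots> \<le> infsum ?h UNIV"
      by (rule infsum_mono_neutral) (auto intro: summable_on_subset_banach[OF sumU])
    finally show ?thesis unfolding energy_on_def .
  qed
  have "A * (\<Sum>\<^sub>\<infinity>n\<in>UNIV. (cmod (ft g n))^2) \<le> A * energy_on X UNIV"
    using eU A0 by simp
  also have "\<dots> \<le> energy_on X S" by (rule ineq)
  finally show "A * (\<Sum>\<^sub>\<infinity>n\<in>UNIV. (cmod (ft g n))^2) \<le> (\<Sum>\<^sub>\<infinity>n\<in>{n. (v, n) \<in> S}. (cmod (ft g n))^2)"
    unfolding eS .
qed


theorem corollary5:
  fixes W U :: "real^'n^'n" and F :: "'n \<Rightarrow> real set" and Sp :: "'n set"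
    and S :: "('n \<times> int) set" and A A' :: real and v :: 'n
  assumes "undirected_weights W"
    and "laplacian_eigvecs W U"
    and "\<forall>i. F i \<in> sets lborel \<and> F i \<subseteq> {-1/2..<1/2}"
    and "card Sp = card (Iall F)"
    and "sub_rank U Sp (Iall F) = card (Iall F)"
    and "S \<subseteq> Sp \<times> UNIV"
    and "stable_sampling U F S A A'"
    and "v \<in> Sp"
  shows "R_D {n. (v, n) \<in> S} \<ge>
    ereal ((\<Sum>i\<in>UNIV. measure lborel (F i))
       - (LINT f:(\<Union>i. F i)|lborel. real (sub_rank U (Sp - {v}) (Iset F f))))"
proof -
  define E where "E = {f. f \<in> I0 \<and> sub_rank U (Sp - {v}) (Iset F f) < card (Iset F f)}"
  have full: "dim (colv U Sp ` Iall F) = card (Iall F)"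
    using assms(5) by (simp add: sub_rank_colv)
  have samp: "sampling_ok E {n. (v, n) \<in> S} A"
    unfolding E_def by (rule samp_from_stable[OF assms(3) full assms(6) assms(7) assms(8)])
  have A0: "A > 0" using assms(7) unfolding stable_sampling_def by simp
  have Fb: "\<And>i. F i \<in> sets borel" using assms(3) by simp
  have Eb: "E \<in> sets borel"
  proof -
    have "E = I0 \<inter> {f. sub_rank U (Sp - {v}) (Iset F f) < card (Iset F f)}" unfolding E_def by auto
    also have "\<dots> \<in> sets borel" by (intro sets.Int I0_sets Iset_pred_sets Fb)
    finally show ?thesis .
  qed
  have EI: "E \<subseteq> I0" unfolding E_def by auto
  have "ereal ((\<Sum>i\<in>UNIV. measure lborel (F i))
       - (LINT f:(\<Union>i. F i)|lborel. real (sub_rank U (Sp - {v}) (Iset F f)))) \<le> ereal (measure lborel E)"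
    using rhs_le[OF assms(3) full assms(8)] unfolding E_def by simp
  also have "\<dots> \<le> R_D {n. (v, n) \<in> S}"
    by (rule landau[OF samp A0 Eb EI])
  finally show ?thesis .
qed

end
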